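(* Let $\rho$ be a state of a finite-dimensional system with Hamiltonian $H$, and let $\beta>0$. Then the thermal polytope of the maximally active state $\hat\rho$ contains the thermal polytope of $U\rho U^\dagger$ for every unitary $U$.
   Context: Write $H=\sum_{i=0}^{d-1}E_i|i\rangle\langle i|$ with $E_0\le\dots\le E_{d-1}$. The maximally active state of $\rho$ is $\hat\rho=\sum_i\lambda_i^\uparrow|i\rangle\langle i|$, where $\lambda^\uparrow_0\le\dots\le\lambda^\uparrow_{d-1}$ are the eigenvalues of $\rho$ in ascending order. A dephasing thermalization is a quantum channel $\Lambda$ with $\Lambda(\tau)=\tau$, where $\tau=e^{-\beta H}/\mathrm{tr}[e^{-\beta H}]$, and with $\langle E|\Lambda(\sigma)|E'\rangle=0$ for all $\sigma$ whenever $|E\rangle,|E'\rangle$ are eigenstates of $H$ with distinct energies. The thermal polytope of a state $\sigma$ is the set of population vectors $(\langle i|\Lambda(\sigma)|i\rangle)_{i}$ (in the energy eigenbasis, chosen within degenerate eigenspaces to diagonalize the relevant state) over all dephasing thermalizations $\Lambda$. *)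

theory Defs
  imports Complex_Main "Jordan_Normal_Form.Char_Poly"
begin

definition adj :: "complex mat \<Rightarrow> complex mat" where
  "adj A = mat (dim_col A) (dim_row A) (\<lambda>(i,j). cnj (A $$ (j,i)))"

definition mtrace :: "complex mat \<Rightarrow> complex" where
  "mtrace A = (\<Sum>i<dim_row A. A $$ (i,i))"

definition psd :: "nat \<Rightarrow> complex mat \<Rightarrow> bool" where
  "psd n A \<longleftrightarrow> A \<in> carrier_mat n n \<and> adj A = A \<and>
     (\<forall>v \<in> carrier_vec n. Im (conjugate v \<bullet> (A *\<^sub>v v)) = 0 \<and> Re (conjugate v \<bullet> (A *\<^sub>v v)) \<ge> 0)"

definition is_state :: "nat \<Rightarrow> complex mat \<Rightarrow> bool" where
  "is_state d \<rho> \<longleftrightarrow> psd d \<rho> \<and> mtrace \<rho> = 1"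

definition unitary_mat :: "nat \<Rightarrow> complex mat \<Rightarrow> bool" where
  "unitary_mat d U \<longleftrightarrow> U \<in> carrier_mat d d \<and> U * adj U = 1\<^sub>m d \<and> adj U * U = 1\<^sub>m d"

definition diag_of :: "nat \<Rightarrow> (nat \<Rightarrow> complex) \<Rightarrow> complex mat" where
  "diag_of d f = mat d d (\<lambda>(i,j). if i = j then f i else 0)"

definition hamiltonian :: "nat \<Rightarrow> (nat \<Rightarrow> real) \<Rightarrow> complex mat" where
  "hamiltonian d E = diag_of d (\<lambda>i. complex_of_real (E i))"

(* Gibbs state tau = exp(-beta H) / tr exp(-beta H) *)
definition gibbs :: "nat \<Rightarrow> (nat \<Rightarrow> real) \<Rightarrow> real \<Rightarrow> complex mat" where
  "gibbs d E \<beta> = diag_of d (\<lambda>i. complex_of_real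
      (exp (- \<beta> * E i) / (\<Sum>k<d. exp (- \<beta> * E k))))"

(* ampliation id_n \<otimes> \<Lambda>, acting on (n*d)x(n*d) matrices viewed as n x n blocks of d x d
   matrices (index a*d+i for C^n \<otimes> C^d) *)
definition ampliation :: "nat \<Rightarrow> nat \<Rightarrow> (complex mat \<Rightarrow> complex mat) \<Rightarrow> complex mat \<Rightarrow> complex mat" where
  "ampliation d n \<Lambda> X = mat (n*d) (n*d) (\<lambda>(r,c).
      \<Lambda> (mat d d (\<lambda>(i,j). X $$ ((r div d) * d + i, (c div d) * d + j))) $$ (r mod d, c mod d))"

(* quantum channel on d x d matrices: linear, completely positive, trace preserving *)
definition quantum_channel :: "nat \<Rightarrow> (complex mat \<Rightarrow> complex mat) \<Rightarrow> bool" where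
  "quantum_channel d \<Lambda> \<longleftrightarrow>
     (\<forall>X \<in> carrier_mat d d. \<Lambda> X \<in> carrier_mat d d) \<and>
     (\<forall>X \<in> carrier_mat d d. \<forall>Y \<in> carrier_mat d d. \<Lambda> (X + Y) = \<Lambda> X + \<Lambda> Y) \<and>
     (\<forall>X \<in> carrier_mat d d. \<forall>c. \<Lambda> (c \<cdot>\<^sub>m X) = c \<cdot>\<^sub>m \<Lambda> X) \<and>
     (\<forall>X \<in> carrier_mat d d. mtrace (\<Lambda> X) = mtrace X) \<and>
     (\<forall>n X. psd (n*d) X \<longrightarrow> psd (n*d) (ampliation d n \<Lambda> X))"

(* dephasing thermalization: channel fixing the Gibbs state and killing coherences between
   distinct energies (H is diagonal in the computational basis) *)
definition dephasing_thermalization ::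
  "nat \<Rightarrow> (nat \<Rightarrow> real) \<Rightarrow> real \<Rightarrow> (complex mat \<Rightarrow> complex mat) \<Rightarrow> bool" where
  "dephasing_thermalization d E \<beta> \<Lambda> \<longleftrightarrow>
     quantum_channel d \<Lambda> \<and> \<Lambda> (gibbs d E \<beta>) = gibbs d E \<beta> \<and>
     (\<forall>\<sigma> \<in> carrier_mat d d. \<forall>i<d. \<forall>j<d. E i \<noteq> E j \<longrightarrow> \<Lambda> \<sigma> $$ (i,j) = 0)"

(* unitary acting within the energy eigenspaces of H (a change of energy eigenbasis) *)
definition energy_basis_change :: "nat \<Rightarrow> (nat \<Rightarrow> real) \<Rightarrow> complex mat \<Rightarrow> bool" where
  "energy_basis_change d E W \<longleftrightarrow> unitary_mat d W \<and>
     (\<forall>i<d. \<forall>j<d. E i \<noteq> E j \<longrightarrow> W $$ (i,j) = 0)"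

(* thermal polytope of \<sigma>: population vectors of \<Lambda>(\<sigma>), read off in an energy eigenbasis
   (chosen inside degenerate eigenspaces) that diagonalizes \<Lambda>(\<sigma>) *)
definition thermal_polytope :: "nat \<Rightarrow> (nat \<Rightarrow> real) \<Rightarrow> real \<Rightarrow> complex mat \<Rightarrow> real vec set" where
  "thermal_polytope d E \<beta> \<sigma> = {p. \<exists>\<Lambda> W. dephasing_thermalization d E \<beta> \<Lambda> \<and>
       energy_basis_change d E W \<and> diagonal_mat (adj W * \<Lambda> \<sigma> * W) \<and>
       p = vec d (\<lambda>i. Re ((adj W * \<Lambda> \<sigma> * W) $$ (i,i)))}"

definition ascending_eigenvalues :: "complex mat \<Rightarrow> real list \<Rightarrow> bool" where
  "ascending_eigenvalues \<rho> lam \<longleftrightarrow> length lam = dim_row \<rho> \<and> sorted lam \<and>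
     char_poly \<rho> = (\<Prod>a \<leftarrow> lam. [:- complex_of_real a, 1:])"

definition maximally_active :: "nat \<Rightarrow> real list \<Rightarrow> complex mat" where
  "maximally_active d lam = diag_of d (\<lambda>i. complex_of_real (lam ! i))"

end

theory Submission
  imports Defs "Jordan_Normal_Form.Schur_Decomposition"
begin


definition psum :: "(nat \<Rightarrow> real) \<Rightarrow> nat \<Rightarrow> real" where
  "psum t i = (\<Sum>j<i. t j)"

definition clamp :: "real \<Rightarrow> real \<Rightarrow> real \<Rightarrow> real" where
  "clamp x y z = max x (min y z)"

definition ov :: "(nat \<Rightarrow> real) \<Rightarrow> real \<Rightarrow> real \<Rightarrow> nat \<Rightarrow> real" where
  "ov t x y i = clamp x y (psum t (Suc i)) - clamp x y (psum t i)"

lemma psum_Suc: "psum t (Suc i) = psum t i + t i"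
  by (simp add: psum_def)

lemma psum_mono:
  assumes "\<forall>i<n. 0 \<le> t i" "i \<le> j" "j \<le> n"
  shows "psum t i \<le> psum t j"
proof -
  have "psum t j = psum t i + (\<Sum>k\<in>{i..<j}. t k)"
    unfolding psum_def using assms(2)
    by (metis sum.atLeastLessThan_concat lessThan_atLeast0 zero_le)
  moreover have "(\<Sum>k\<in>{i..<j}. t k) \<ge> 0"
    using assms by (intro sum_nonneg) auto
  ultimately show ?thesis by simp
qed

lemma psum_nonneg: "\<forall>i<n. 0 \<le> t i \<Longrightarrow> i \<le> n \<Longrightarrow> 0 \<le> psum t i"
  using psum_mono[of n t 0 i] by (simp add: psum_def)

lemma ov_nonneg: "x \<le> y \<Longrightarrow> 0 \<le> t i \<Longrightarrow> 0 \<le> ov t x y i"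
  unfolding ov_def clamp_def psum_Suc by (auto simp: max_def min_def)

lemma ov_le: "x \<le> y \<Longrightarrow> 0 \<le> t i \<Longrightarrow> ov t x y i \<le> t i"
  unfolding ov_def clamp_def psum_Suc by (auto simp: max_def min_def)

lemma ov_add: "x \<le> y \<Longrightarrow> y \<le> z \<Longrightarrow> ov t x z i = ov t x y i + ov t y z i"
  unfolding ov_def clamp_def by (auto simp: max_def min_def)

lemma ov_empty: "ov t x x i = 0"
  unfolding ov_def clamp_def by (auto simp: max_def min_def)

lemma ov_sum:
  assumes "\<forall>i<n. 0 \<le> t i" "0 \<le> x" "x \<le> y" "y \<le> psum t n"
  shows "(\<Sum>i<n. ov t x y i) = y - x"
proof -
  have "(\<Sum>i<n. ov t x y i) = clamp x y (psum t n) - clamp x y (psum t 0)"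
    unfolding ov_def by (rule sum_lessThan_telescope)
  also have "\<dots> = y - x" using assms by (simp add: clamp_def psum_def)
  finally show ?thesis .
qed

lemma ov_full:
  assumes "\<forall>i<n. 0 \<le> t i" "i < n"
  shows "ov t 0 (psum t n) i = t i"
proof -
  have "0 \<le> psum t i" using psum_nonneg assms by auto
  moreover have "psum t (Suc i) \<le> psum t n" using psum_mono[of n t "Suc i" n] assms by auto
  moreover have "psum t i \<le> psum t (Suc i)" using psum_mono[of n t i "Suc i"] assms by auto
  ultimately show ?thesis unfolding ov_def clamp_def psum_Suc by (auto simp: max_def min_def)
qed

lemma ov_pos_lower: "x \<le> y \<Longrightarrow> 0 < ov t x y i \<Longrightarrow> x < psum t (Suc i)"
  unfolding ov_def clamp_def by (auto simp: max_def min_def split: if_splits)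

lemma ov_pos_upper: "x \<le> y \<Longrightarrow> 0 < ov t x y i \<Longrightarrow> psum t i < y"
  unfolding ov_def clamp_def by (auto simp: max_def min_def split: if_splits)

lemma ov_lt_full:
  assumes "\<forall>i<n. 0 \<le> t i" "i < n" "x \<le> psum t n" "ov t x (psum t n) i < t i"
  shows "psum t i < x"
proof (rule ccontr)
  assume "\<not> psum t i < x"
  moreover have "psum t (Suc i) \<le> psum t n" using psum_mono[of n t "Suc i" n] assms by auto
  moreover have "psum t i \<le> psum t (Suc i)" using psum_mono[of n t i "Suc i"] assms by auto
  ultimately have "ov t x (psum t n) i = t i" unfolding ov_def clamp_def psum_Suc
    by (auto simp: max_def min_def)
  with assms show False by simp
qed

lemma sorted_le_from_psum:
  assumes "\<forall>i<n. 0 \<le> t i" "i0 < n" "i < n" "psum t i < psum t (Suc i0)"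
  shows "i \<le> i0"
proof (rule ccontr)
  assume "\<not> i \<le> i0"
  then have "Suc i0 \<le> i" by simp
  then have "psum t (Suc i0) \<le> psum t i" using psum_mono[of n t "Suc i0" i] assms by auto
  with assms show False by simp
qed

lemma ex_min_fun:
  fixes f :: "nat \<Rightarrow> real"
  assumes "finite T" "T \<noteq> {}"
  obtains i0 where "i0 \<in> T" "\<And>i. i \<in> T \<Longrightarrow> f i0 \<le> f i"
proof -
  have "Min (f ` T) \<in> f ` T" using assms by (intro Min_in) auto
  then obtain i0 where "i0 \<in> T" "f i0 = Min (f ` T)" by auto
  then show ?thesis using that assms by (metis Min_le finite_imageI image_eqI)
qed

lemma opt_eq:
  assumes t: "\<forall>i<n. 0 \<le> t i"
    and r: "\<forall>i j. i \<le> j \<and> j < n \<longrightarrow> r i \<le> r j"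
    and m: "0 \<le> m" "m \<le> psum t n"
    and c: "\<forall>i<n. 0 \<le> c i \<and> c i \<le> t i"
    and cs: "(\<Sum>i<n. c i) = m"
  shows "(\<Sum>i<n. r i * c i) \<le> (\<Sum>i<n. r i * ov t (psum t n - m) (psum t n) i)"
proof -
  define M where "M = psum t n"
  define x where "x = M - m"
  define T where "T = {i. i < n \<and> 0 < ov t x M i}"
  have ovs: "(\<Sum>i<n. ov t x M i) = m"
    using ov_sum[OF t, of x M] m unfolding x_def M_def by auto
  have ovnn: "\<And>i. i < n \<Longrightarrow> 0 \<le> ov t x M i" using ov_nonneg t m unfolding x_def by auto
  show ?thesis
  proof (cases "T = {}")
    case True
    then have "\<And>i. i < n \<Longrightarrow> ov t x M i = 0" using ovnn unfolding T_def
      by (metis (mono_tags, lifting) empty_iff less_eq_real_def mem_Collect_eq)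
    then have "m = 0" using ovs by simp
    then have "\<And>i. i < n \<Longrightarrow> c i = 0" using cs c
      by (metis (no_types, lifting) finite_lessThan lessThan_iff sum_nonneg_eq_0_iff)
    then show ?thesis using \<open>\<And>i. i < n \<Longrightarrow> ov t x M i = 0\<close>
      unfolding x_def M_def by simp
  next
    case False
    have fin: "finite T" unfolding T_def by auto
    obtain i0 where i0: "i0 \<in> T" "\<And>i. i \<in> T \<Longrightarrow> r i0 \<le> r i"
      using ex_min_fun[OF fin False] by metis  
    have i0n: "i0 < n" and i0pos: "0 < ov t x M i0" using i0 unfolding T_def by auto
    have xM: "x \<le> M" using m unfolding x_def by simp
    have upper: "psum t i < psum t (Suc i0)" if "i < n" "ov t x M i < t i" for i
    proof -
      have "psum t i < x" using ov_lt_full[OF t that(1), of x] that xM unfolding M_def by auto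
      moreover have "x < psum t (Suc i0)" using ov_pos_lower[OF xM i0pos] .
      ultimately show ?thesis by simp
    qed
    have key: "0 \<le> (r i - r i0) * (ov t x M i - c i)" if i: "i < n" for i
    proof (cases "r i0 \<le> r i")
      case True
      show ?thesis
      proof (cases "c i \<le> ov t x M i")
        case True then show ?thesis using \<open>r i0 \<le> r i\<close> by simp
      next
        case False
        then have "ov t x M i < t i" using c i by force
        then have "i \<le> i0" using sorted_le_from_psum[OF t i0n i] upper[OF i] by auto
        then have "r i \<le> r i0" using r i0n by auto
        then show ?thesis using True by simp
      qed
    next
      case False
      then have "i \<notin> T" using i0 by auto
      then have "ov t x M i = 0" using ovnn[OF i] i unfolding T_def by auto
      then show ?thesis using False c i by (simp add: mult_nonpos_nonneg)
    qed
    have "(\<Sum>i<n. r i * ov t x M i) - (\<Sum>i<n. r i * c i)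
        = (\<Sum>i<n. (r i - r i0) * (ov t x M i - c i) + r i0 * (ov t x M i - c i))"
      unfolding sum_subtractf[symmetric] by (intro sum.cong) (auto simp: algebra_simps)
    also have "\<dots> = (\<Sum>i<n. (r i - r i0) * (ov t x M i - c i)) + r i0 * ((\<Sum>i<n. ov t x M i) - (\<Sum>i<n. c i))"
      by (simp add: sum.distrib sum_distrib_left[symmetric] sum_subtractf)
    also have "\<dots> = (\<Sum>i<n. (r i - r i0) * (ov t x M i - c i))" using ovs cs by simp
    also have "\<dots> \<ge> 0" using key by (intro sum_nonneg) auto
    finally show ?thesis unfolding x_def M_def by simp
  qed
qed

lemma opt_le:
  assumes t: "\<forall>i<n. 0 \<le> t i"
    and r: "\<forall>i j. i \<le> j \<and> j < n \<longrightarrow> r i \<le> r j"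
    and r0: "\<forall>i<n. 0 \<le> r i"
    and m: "m \<le> psum t n"
    and c: "\<forall>i<n. 0 \<le> c i \<and> c i \<le> t i"
    and cs: "(\<Sum>i<n. c i) \<le> m"
  shows "(\<Sum>i<n. r i * c i) \<le> (\<Sum>i<n. r i * ov t (psum t n - m) (psum t n) i)"
proof -
  define m' where "m' = (\<Sum>i<n. c i)"
  have m'0: "0 \<le> m'" unfolding m'_def using c by (intro sum_nonneg) auto
  have "(\<Sum>i<n. r i * c i) \<le> (\<Sum>i<n. r i * ov t (psum t n - m') (psum t n) i)"
    by (rule opt_eq[OF t r m'0 _ c]) (use cs m in \<open>auto simp: m'_def\<close>)
  also have "\<dots> \<le> (\<Sum>i<n. r i * ov t (psum t n - m) (psum t n) i)"
  proof (intro sum_mono mult_left_mono)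
    fix i assume i: "i \<in> {..<n}"
    have "ov t (psum t n - m) (psum t n) i = ov t (psum t n - m) (psum t n - m') i + ov t (psum t n - m') (psum t n) i"
      using cs m'0 by (intro ov_add) (auto simp: m'_def)
    moreover have "0 \<le> ov t (psum t n - m) (psum t n - m') i"
      using cs t i by (intro ov_nonneg) (auto simp: m'_def)
    ultimately show "ov t (psum t n - m') (psum t n) i \<le> ov t (psum t n - m) (psum t n) i" by simp
    show "0 \<le> r i" using r0 i by auto
  qed
  finally show ?thesis .
qed

lemma avg_le:
  assumes t: "\<forall>i<n. 0 \<le> t i"
    and r: "\<forall>i j. i \<le> j \<and> j < n \<longrightarrow> r i \<le> r j"
    and ab: "0 \<le> a" "a \<le> b" "b \<le> x" "x \<le> psum t n"
  shows "(\<Sum>i<n. r i * ov t a b i) * (psum t n - x) \<le> (\<Sum>i<n. r i * ov t x (psum t n) i) * (b - a)"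
proof -
  define M where "M = psum t n"
  define T where "T = {i. i < n \<and> 0 < ov t x M i}"
  have ovnn: "\<And>i. i < n \<Longrightarrow> 0 \<le> ov t x M i" using ov_nonneg t ab unfolding M_def by auto
  have ovnn2: "\<And>i. i < n \<Longrightarrow> 0 \<le> ov t a b i" using ov_nonneg t ab by auto
  have sxM: "(\<Sum>i<n. ov t x M i) = M - x" using ov_sum[OF t, of x M] ab unfolding M_def by auto
  have sab: "(\<Sum>i<n. ov t a b i) = b - a" using ov_sum[OF t, of a b] ab by auto
  show ?thesis
  proof (cases "T = {}")
    case True
    then have z: "\<And>i. i < n \<Longrightarrow> ov t x M i = 0" using ovnn unfolding T_def
      by (metis (mono_tags, lifting) empty_iff less_eq_real_def mem_Collect_eq)
    then have "M - x = 0" using sxM by simp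
    then show ?thesis using z unfolding M_def by simp
  next
    case False
    have fin: "finite T" unfolding T_def by auto
    obtain i0 where i0: "i0 \<in> T" "\<And>i. i \<in> T \<Longrightarrow> r i0 \<le> r i"
      using ex_min_fun[OF fin False] by metis
    have i0n: "i0 < n" and i0pos: "0 < ov t x M i0" using i0 unfolding T_def by auto
    have xM: "x \<le> M" using ab unfolding M_def by simp
    have lo: "r i0 * ov t x M i \<le> r i * ov t x M i" if i: "i < n" for i
    proof (cases "i \<in> T")
      case True then show ?thesis using i0 ovnn[OF i] by (simp add: mult_right_mono)
    next
      case False then have "ov t x M i = 0" using ovnn[OF i] i unfolding T_def by auto
      then show ?thesis by simp
    qed
    have hi: "r i * ov t a b i \<le> r i0 * ov t a b i" if i: "i < n" for i
    proof (cases "0 < ov t a b i")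
      case True
      then have "psum t i < b" using ov_pos_upper ab by auto
      moreover have "x < psum t (Suc i0)" using ov_pos_lower[OF xM i0pos] .
      ultimately have "i \<le> i0" using sorted_le_from_psum[OF t i0n i] ab by auto
      then have "r i \<le> r i0" using r i0n by auto
      then show ?thesis using ovnn2[OF i] by (simp add: mult_right_mono)
    next
      case False then have "ov t a b i = 0" using ovnn2[OF i] by auto
      then show ?thesis by simp
    qed
    have s1: "(\<Sum>i<n. r i * ov t a b i) \<le> r i0 * (b - a)"
    proof -
      have "(\<Sum>i<n. r i * ov t a b i) \<le> (\<Sum>i<n. r i0 * ov t a b i)"
        using hi by (intro sum_mono) auto
      also have "\<dots> = r i0 * (b - a)" using sab by (simp add: sum_distrib_left[symmetric])
      finally show ?thesis .
    qed
    have s2: "r i0 * (M - x) \<le> (\<Sum>i<n. r i * ov t x M i)"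
    proof -
      have "r i0 * (M - x) = (\<Sum>i<n. r i0 * ov t x M i)" using sxM by (simp add: sum_distrib_left[symmetric])
      also have "\<dots> \<le> (\<Sum>i<n. r i * ov t x M i)" using lo by (intro sum_mono) auto
      finally show ?thesis .
    qed
    have "(\<Sum>i<n. r i * ov t a b i) * (M - x) \<le> r i0 * (b - a) * (M - x)"
      using s1 xM by (intro mult_right_mono) auto
    also have "\<dots> = r i0 * (M - x) * (b - a)" by simp
    also have "\<dots> \<le> (\<Sum>i<n. r i * ov t x M i) * (b - a)"
      using s2 ab by (intro mult_right_mono) auto
    finally show ?thesis unfolding M_def .
  qed
qed


definition condR :: "nat \<Rightarrow> (nat \<Rightarrow> real) \<Rightarrow> (nat \<Rightarrow> real) \<Rightarrow> nat set \<Rightarrow> (nat \<Rightarrow> real) \<Rightarrow> (nat \<Rightarrow> real) \<Rightarrow> bool" where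
  "condR n r t K \<tau> p \<longleftrightarrow> (\<forall>S\<subseteq>K. \<exists>c. (\<forall>i<n. 0 \<le> c i \<and> c i \<le> t i) \<and>
      (\<Sum>i<n. c i) \<le> (\<Sum>k\<in>S. \<tau> k) \<and> (\<Sum>k\<in>S. p k) \<le> (\<Sum>i<n. r i * c i))"

lemma condRD:
  assumes "condR n r t K \<tau> p" "S \<subseteq> K"
  obtains c where "\<forall>i<n. 0 \<le> c i \<and> c i \<le> t i" "(\<Sum>i<n. c i) \<le> (\<Sum>k\<in>S. \<tau> k)"
    "(\<Sum>k\<in>S. p k) \<le> (\<Sum>i<n. r i * c i)"
  using assms unfolding condR_def by blast

lemma classical_core:
  fixes r p \<tau> :: "nat \<Rightarrow> real"
  assumes fin: "finite K" and ne: "K \<noteq> {}"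
    and r: "\<forall>i j. i \<le> j \<and> j < n \<longrightarrow> r i \<le> r j" and r0: "\<forall>i<n. 0 \<le> r i"
    and tau: "\<forall>k\<in>K. 0 < \<tau> k"
    and t: "\<forall>i<n. 0 \<le> t i"
    and st: "(\<Sum>i<n. t i) = (\<Sum>k\<in>K. \<tau> k)"
    and srt: "(\<Sum>i<n. r i * t i) = (\<Sum>k\<in>K. p k)"
    and cond: "condR n r t K \<tau> p"
  shows "\<exists>X. (\<forall>k\<in>K. \<forall>i<n. 0 \<le> X k i) \<and> (\<forall>i<n. (\<Sum>k\<in>K. X k i) = t i) \<and>
     (\<forall>k\<in>K. (\<Sum>i<n. X k i) = \<tau> k) \<and> (\<forall>k\<in>K. (\<Sum>i<n. r i * X k i) = p k)"
  using fin ne tau t st srt cond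
proof (induction "card K" arbitrary: K t rule: less_induct)
  case less
  note fin = less.prems(1) and ne = less.prems(2) and tau = less.prems(3) and t = less.prems(4)
    and st = less.prems(5) and srt = less.prems(6) and cond = less.prems(7)
  show ?case
  proof (cases "card K = 1")
    case True
    then obtain k where K: "K = {k}" by (meson card_1_singletonE)
    show ?thesis
      by (rule exI[of _ "\<lambda>k i. t i"]) (use t st srt K in auto)
  next
    case False
    have "card K > 0" using fin ne by (simp add: card_gt_0_iff)
    then have cK: "card K \<ge> 2" using False by simp
    obtain ks where ks: "ks \<in> K" "\<And>k. k \<in> K \<Longrightarrow> - (p ks / \<tau> ks) \<le> - (p k / \<tau> k)"
      using ex_min_fun[OF fin ne, of "\<lambda>k. - (p k / \<tau> k)"] by metis
    define K' where "K' = K - {ks}"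
    have finK': "finite K'" using fin unfolding K'_def by auto
    have cardK': "card K' = card K - 1" unfolding K'_def using ks fin by simp
    have cK': "card K' < card K" using cardK' cK by simp
    have neK': "K' \<noteq> {}"
    proof
      assume "K' = {}"
      then have "card K' = 0" by simp
      with cardK' cK show False by simp
    qed
    define \<tau>s where "\<tau>s = \<tau> ks"
    have \<tau>s: "0 < \<tau>s" using tau ks unfolding \<tau>s_def by auto
    define M where "M = psum t n"
    have M: "M = (\<Sum>i<n. t i)" unfolding M_def psum_def ..
    have sumK: "(\<Sum>k\<in>K. f k) = f ks + (\<Sum>k\<in>K'. f k)" for f :: "nat \<Rightarrow> real"
      unfolding K'_def using fin ks by (simp add: sum.remove)
    have tauK'0: "0 \<le> (\<Sum>k\<in>K'. \<tau> k)" using tau unfolding K'_def by (intro sum_nonneg) auto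
    have MK: "M = \<tau>s + (\<Sum>k\<in>K'. \<tau> k)" using st sumK[of \<tau>] M unfolding \<tau>s_def by simp
    have \<tau>sM: "\<tau>s \<le> M" using MK tauK'0 by simp
    define F where "F x y = (\<Sum>i<n. r i * ov t x y i)" for x y
    have ratio: "p k \<le> (p ks / \<tau>s) * \<tau> k" if "k \<in> K" for k
    proof -
      have "p k / \<tau> k \<le> p ks / \<tau>s" using ks(2)[OF that] unfolding \<tau>s_def by simp
      then show ?thesis using tau that by (simp add: divide_le_eq)
    qed
    have F0M: "F 0 M = (\<Sum>k\<in>K. p k)"
      unfolding F_def M_def using ov_full[OF t] srt by (simp)
    have Fadd: "F x z = F x y + F y z" if "x \<le> y" "y \<le> z" for x y z
      unfolding F_def using ov_add[OF that] by (simp add: distrib_left sum.distrib)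
    have up: "p ks \<le> F (M - \<tau>s) M"
    proof -
      obtain c where c: "\<forall>i<n. 0 \<le> c i \<and> c i \<le> t i" "(\<Sum>i<n. c i) \<le> (\<Sum>k\<in>{ks}. \<tau> k)"
          "(\<Sum>k\<in>{ks}. p k) \<le> (\<Sum>i<n. r i * c i)"
        using condRD[OF cond, of "{ks}"] ks by blast
      have "(\<Sum>i<n. r i * c i) \<le> F (M - \<tau>s) M"
        unfolding F_def M_def by (rule opt_le[OF t r r0]) (use c \<tau>sM in \<open>auto simp: \<tau>s_def M_def\<close>)
      then show ?thesis using c by simp
    qed
    have lo: "F 0 \<tau>s \<le> p ks"
    proof -
      obtain c where c: "\<forall>i<n. 0 \<le> c i \<and> c i \<le> t i" "(\<Sum>i<n. c i) \<le> (\<Sum>k\<in>K'. \<tau> k)"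
          "(\<Sum>k\<in>K'. p k) \<le> (\<Sum>i<n. r i * c i)"
        using condRD[OF cond, of K'] unfolding K'_def by blast
      have "(\<Sum>i<n. r i * c i) \<le> F (M - (\<Sum>k\<in>K'. \<tau> k)) M"
        unfolding F_def M_def by (rule opt_le[OF t r r0]) (use c MK \<tau>s in \<open>auto simp: M_def\<close>)
      also have "M - (\<Sum>k\<in>K'. \<tau> k) = \<tau>s" using MK by simp
      finally have "(\<Sum>k\<in>K'. p k) \<le> F \<tau>s M" using c by simp
      moreover have "F 0 M = F 0 \<tau>s + F \<tau>s M" using Fadd[of 0 "\<tau>s" M] \<tau>s \<tau>sM by simp
      ultimately show ?thesis using F0M sumK[of p] by simp
    qed
    have cont: "continuous_on {0..M - \<tau>s} (\<lambda>a. F a (a + \<tau>s))"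
      unfolding F_def ov_def clamp_def by (intro continuous_intros)
    obtain a where a: "0 \<le> a" "a \<le> M - \<tau>s" "F a (a + \<tau>s) = p ks"
      using IVT'[of "\<lambda>a. F a (a + \<tau>s)" 0 "p ks" "M - \<tau>s", OF _ _ _ cont] lo up \<tau>sM by auto
    define b where "b = a + \<tau>s"
    have ab: "a \<le> b" "b \<le> M" using a \<tau>s unfolding b_def by auto
    define w where "w i = ov t a b i" for i
    define t' where "t' i = t i - w i" for i
    have w0: "\<forall>i<n. 0 \<le> w i" unfolding w_def using ov_nonneg ab t by auto
    have t'0: "\<forall>i<n. 0 \<le> t' i" unfolding t'_def w_def using ov_le ab t by auto
    have sw: "(\<Sum>i<n. w i) = \<tau>s" unfolding w_def using ov_sum[OF t, of a b] ab a unfolding M_def b_def by auto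
    have srw: "(\<Sum>i<n. r i * w i) = p ks" using a unfolding w_def F_def b_def by simp
    have st': "(\<Sum>i<n. t' i) = (\<Sum>k\<in>K'. \<tau> k)"
      unfolding t'_def sum_subtractf using sw M MK by simp
    have srt': "(\<Sum>i<n. r i * t' i) = (\<Sum>k\<in>K'. p k)"
      unfolding t'_def right_diff_distrib sum_subtractf using srw srt sumK[of p] by simp
    have tau': "\<forall>k\<in>K'. 0 < \<tau> k" using tau unfolding K'_def by auto
    have cond': "condR n r t' K' \<tau> p"
      unfolding condR_def
    proof (intro allI impI)
      fix S assume SK': "S \<subseteq> K'"
      define m where "m = (\<Sum>k\<in>S. \<tau> k)"
      have finS: "finite S" using SK' finK' finite_subset by auto
      have ksS: "ks \<notin> S" using SK' unfolding K'_def by auto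
      have m0: "0 \<le> m" unfolding m_def using SK' tau' by (intro sum_nonneg) (auto simp: less_imp_le)
      have mM: "m + \<tau>s \<le> M"
      proof -
        have "m \<le> (\<Sum>k\<in>K'. \<tau> k)" unfolding m_def
          using SK' tau' finK' by (intro sum_mono2) auto
        then show ?thesis using MK by simp
      qed
      show "\<exists>c. (\<forall>i<n. 0 \<le> c i \<and> c i \<le> t' i) \<and> (\<Sum>i<n. c i) \<le> (\<Sum>k\<in>S. \<tau> k) \<and>
           (\<Sum>k\<in>S. p k) \<le> (\<Sum>i<n. r i * c i)"
      proof (cases "m \<le> M - b")
        case True
        define c where "c i = ov t (M - m) M i" for i
        have "\<forall>i<n. 0 \<le> c i \<and> c i \<le> t' i"
        proof (intro allI impI conjI)
          fix i assume i: "i < n"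
          show "0 \<le> c i" unfolding c_def using ov_nonneg t i m0 by auto
          have "ov t a M i = ov t a b i + ov t b (M - m) i + ov t (M - m) M i"
            using ov_add[of a b M t i] ov_add[of b "M - m" M t i] ab True m0 by auto
          moreover have "ov t a M i \<le> t i" using ov_le t i ab by auto
          moreover have "0 \<le> ov t b (M - m) i" using ov_nonneg t i True by auto
          ultimately show "c i \<le> t' i" unfolding c_def t'_def w_def by simp
        qed
        moreover have "(\<Sum>i<n. c i) = m" unfolding c_def using ov_sum[OF t, of "M - m" M] m0 mM \<tau>s
          unfolding M_def by auto
        moreover have "(\<Sum>k\<in>S. p k) \<le> (\<Sum>i<n. r i * c i)"
        proof -
          have "(\<Sum>k\<in>S. p k) \<le> (\<Sum>k\<in>S. (p ks / \<tau>s) * \<tau> k)"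
            using ratio SK' unfolding K'_def by (intro sum_mono) auto
          also have "\<dots> = (p ks / \<tau>s) * m" unfolding m_def by (simp add: sum_distrib_left)
          also have "\<dots> \<le> (\<Sum>i<n. r i * c i)"
          proof -
            have "F a b * (M - (M - m)) \<le> F (M - m) M * (b - a)"
              unfolding F_def M_def by (rule avg_le[OF t r]) (use a ab True m0 in \<open>auto simp: M_def\<close>)
            then have "p ks * m \<le> F (M - m) M * \<tau>s" using a unfolding b_def by simp
            then show ?thesis using \<tau>s unfolding c_def F_def by (simp add: divide_le_eq mult.commute)
          qed
          finally show ?thesis .
        qed
        ultimately show ?thesis unfolding m_def by auto
      next
        case False
        define x where "x = M - m - \<tau>s"
        have x: "0 \<le> x" "x \<le> a" using mM False unfolding x_def b_def by auto
        define c where "c i = ov t x M i - w i" for i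
        have dec: "ov t x M i = ov t x a i + w i + ov t b M i" for i
          unfolding w_def using ov_add[of x a M t i] ov_add[of a b M t i] x ab by auto
        have "\<forall>i<n. 0 \<le> c i \<and> c i \<le> t' i"
        proof (intro allI impI conjI)
          fix i assume i: "i < n"
          show "0 \<le> c i" unfolding c_def using dec[of i] ov_nonneg[of x a t i] ov_nonneg[of b M t i] t i x ab
            by auto
          show "c i \<le> t' i" unfolding c_def t'_def using ov_le[of x M t i] t i x ab by auto
        qed
        moreover have "(\<Sum>i<n. c i) = m"
          unfolding c_def sum_subtractf using ov_sum[OF t, of x M] x ab sw unfolding M_def x_def
          by auto
        moreover have "(\<Sum>k\<in>S. p k) \<le> (\<Sum>i<n. r i * c i)"
        proof -
          obtain c2 where c2: "\<forall>i<n. 0 \<le> c2 i \<and> c2 i \<le> t i" "(\<Sum>i<n. c2 i) \<le> (\<Sum>k\<in>insert ks S. \<tau> k)"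
              "(\<Sum>k\<in>insert ks S. p k) \<le> (\<Sum>i<n. r i * c2 i)"
            using condRD[OF cond, of "insert ks S"] SK' ks unfolding K'_def by blast
          have ins: "(\<Sum>k\<in>insert ks S. f k) = f ks + (\<Sum>k\<in>S. f k)" for f :: "nat \<Rightarrow> real"
            using finS ksS by simp
          have "(\<Sum>i<n. r i * c2 i) \<le> F (M - (m + \<tau>s)) M"
            unfolding F_def M_def by (rule opt_le[OF t r r0]) (use c2 mM ins[of \<tau>] in \<open>auto simp: M_def m_def \<tau>s_def\<close>)
          also have "M - (m + \<tau>s) = x" unfolding x_def by simp
          finally have "p ks + (\<Sum>k\<in>S. p k) \<le> F x M" using c2 ins[of p] by simp
          moreover have "(\<Sum>i<n. r i * c i) = F x M - p ks"
            unfolding c_def F_def right_diff_distrib sum_subtractf using srw by simp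
          ultimately show ?thesis by simp
        qed
        ultimately show ?thesis unfolding m_def by auto
      qed
    qed
    obtain X' where X': "\<forall>k\<in>K'. \<forall>i<n. 0 \<le> X' k i" "\<forall>i<n. (\<Sum>k\<in>K'. X' k i) = t' i"
        "\<forall>k\<in>K'. (\<Sum>i<n. X' k i) = \<tau> k" "\<forall>k\<in>K'. (\<Sum>i<n. r i * X' k i) = p k"
      using less.hyps[OF cK' finK' neK' tau' t'0 st' srt' cond'] by blast
    define X where "X k i = (if k = ks then w i else X' k i)" for k i
    have XK': "(\<Sum>k\<in>K'. X k i) = (\<Sum>k\<in>K'. X' k i)" for i
      unfolding X_def K'_def by (intro sum.cong) auto
    show ?thesis
    proof (rule exI[of _ X], intro conjI ballI allI impI)
      fix k i assume "k \<in> K" "i < n"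
      then show "0 \<le> X k i" using X'(1) w0 unfolding X_def K'_def by auto
    next
      fix i assume i: "i < n"
      have "(\<Sum>k\<in>K. X k i) = X ks i + (\<Sum>k\<in>K'. X k i)" by (rule sumK)
      also have "\<dots> = w i + t' i" using XK' X'(2) i unfolding X_def by simp
      finally show "(\<Sum>k\<in>K. X k i) = t i" unfolding t'_def by simp
    next
      fix k assume k: "k \<in> K"
      show "(\<Sum>i<n. X k i) = \<tau> k"
      proof (cases "k = ks")
        case True then show ?thesis using sw unfolding X_def \<tau>s_def by simp
      next
        case False then show ?thesis using X'(3) k unfolding X_def K'_def by simp
      qed
      show "(\<Sum>i<n. r i * X k i) = p k"
      proof (cases "k = ks")
        case True then show ?thesis using srw unfolding X_def by simp
      next
        case False then show ?thesis using X'(4) k unfolding X_def K'_def by simp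
      qed
    qed
  qed
qed


lemma adj_dims[simp]: "dim_row (adj A) = dim_col A" "dim_col (adj A) = dim_row A"
  unfolding adj_def by auto

lemma adj_index[simp]: "i < dim_col A \<Longrightarrow> j < dim_row A \<Longrightarrow> adj A $$ (i,j) = cnj (A $$ (j,i))"
  unfolding adj_def by auto

lemma adj_carrier[simp]: "A \<in> carrier_mat n m \<Longrightarrow> adj A \<in> carrier_mat m n"
  unfolding adj_def carrier_mat_def by auto

lemma adj_adj[simp]: "adj (adj A) = A"
  by (rule eq_matI) auto

lemma adj_mult:
  assumes "A \<in> carrier_mat n m" "B \<in> carrier_mat m k"
  shows "adj (A * B) = adj B * adj A"
proof (rule eq_matI)
  fix i j assume ij: "i < dim_row (adj B * adj A)" "j < dim_col (adj B * adj A)"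
  then have i: "i < k" and j: "j < n" using assms by auto
  have "adj (A * B) $$ (i,j) = cnj (\<Sum>l<m. A $$ (j,l) * B $$ (l,i))"
    using assms i j by (simp add: index_mult_mat scalar_prod_def row_def col_def lessThan_atLeast0)
  also have "\<dots> = (\<Sum>l<m. cnj (B $$ (l,i)) * cnj (A $$ (j,l)))"
    by (simp add: mult.commute)
  also have "\<dots> = (adj B * adj A) $$ (i,j)"
    using assms i j by (simp add: index_mult_mat scalar_prod_def row_def col_def lessThan_atLeast0)
  finally show "adj (A * B) $$ (i,j) = (adj B * adj A) $$ (i,j)" .
qed (use assms in auto)

lemma adj_one[simp]: "adj (1\<^sub>m n) = 1\<^sub>m n"
  by (rule eq_matI) auto

lemma mtrace_comm:
  assumes "A \<in> carrier_mat n m" "B \<in> carrier_mat m n"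
  shows "mtrace (A * B) = mtrace (B * A)"
proof -
  have "mtrace (A * B) = (\<Sum>i<n. \<Sum>l<m. A $$ (i,l) * B $$ (l,i))"
    unfolding mtrace_def using assms
    by (intro sum.cong) (auto simp: index_mult_mat scalar_prod_def row_def col_def lessThan_atLeast0)
  also have "\<dots> = (\<Sum>l<m. \<Sum>i<n. B $$ (l,i) * A $$ (i,l))"
    by (subst sum.swap) (simp add: mult.commute)
  also have "\<dots> = mtrace (B * A)"
    unfolding mtrace_def using assms
    by (intro sum.cong) (auto simp: index_mult_mat scalar_prod_def row_def col_def lessThan_atLeast0)
  finally show ?thesis .
qed

lemma unitary_mult:
  assumes "unitary_mat d A" "unitary_mat d B"
  shows "unitary_mat d (A * B)"
proof -
  have A: "A \<in> carrier_mat d d" "A * adj A = 1\<^sub>m d" "adj A * A = 1\<^sub>m d"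
    and B: "B \<in> carrier_mat d d" "B * adj B = 1\<^sub>m d" "adj B * B = 1\<^sub>m d"
    using assms unfolding unitary_mat_def by auto
  have aA: "adj A \<in> carrier_mat d d" and aB: "adj B \<in> carrier_mat d d" using A B by auto
  have "A * B * adj (A * B) = A * B * (adj B * adj A)" using adj_mult[OF A(1) B(1)] by simp
  also have "\<dots> = A * (B * (adj B * adj A))" using assoc_mult_mat[OF A(1) B(1), of "adj B * adj A" d] aA aB by simp
  also have "B * (adj B * adj A) = (B * adj B) * adj A" using assoc_mult_mat[OF B(1) aB aA] by simp
  also have "\<dots> = adj A" using B aA left_mult_one_mat by (metis)
  finally have 1: "A * B * adj (A * B) = 1\<^sub>m d" using A by simp
  have "adj (A * B) * (A * B) = adj B * adj A * (A * B)" using adj_mult[OF A(1) B(1)] by simp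
  also have "\<dots> = adj B * (adj A * (A * B))" using assoc_mult_mat[OF aB aA, of "A * B" d] A B by simp
  also have "adj A * (A * B) = (adj A * A) * B" using assoc_mult_mat[OF aA A(1) B(1)] by simp
  also have "\<dots> = B" using A B left_mult_one_mat by metis
  finally have 2: "adj (A * B) * (A * B) = 1\<^sub>m d" using B by simp
  show ?thesis unfolding unitary_mat_def using 1 2 A B by auto
qed

lemma unitary_adj: "unitary_mat d A \<Longrightarrow> unitary_mat d (adj A)"
  unfolding unitary_mat_def by auto

lemma mtrace_conj:
  assumes W: "unitary_mat d W" and M: "M \<in> carrier_mat d d"
  shows "mtrace (adj W * M * W) = mtrace M"
proof -
  have Wc: "W \<in> carrier_mat d d" and WW: "W * adj W = 1\<^sub>m d" using W unfolding unitary_mat_def by auto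
  have aW: "adj W \<in> carrier_mat d d" using Wc by simp
  have "mtrace (adj W * M * W) = mtrace (W * (adj W * M))"
    by (rule mtrace_comm) (use aW M Wc in auto)
  also have "W * (adj W * M) = (W * adj W) * M" using assoc_mult_mat[OF Wc aW M] by simp
  also have "\<dots> = M" using WW M by simp
  finally show ?thesis .
qed


lemma cscalar_sum: "dim_vec w = dim_vec v \<Longrightarrow> v \<bullet>c w = (\<Sum>a<dim_vec v. v $ a * cnj (w $ a))"
  by (simp add: scalar_prod_def lessThan_atLeast0)

lemma unitary_first_col:
  fixes v :: "complex vec"
  assumes v: "v \<in> carrier_vec n" "v \<noteq> 0\<^sub>v n"
  shows "\<exists>U c. unitary_mat n U \<and> (\<forall>a<n. U $$ (a,0) = c * v $ a)"
proof -
  interpret cof_vec_space n "TYPE(complex)" .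
  define b where "b = basis_completion v"
  have b: "set b \<subseteq> carrier_vec n" "distinct b" "\<not> lin_dep (set b)" "hd b = v" "length b = n"
    using basis_completion[OF v] unfolding b_def by auto
  define ws where "ws = gram_schmidt n b"
  have ws: "corthogonal ws" "set ws \<subseteq> carrier_vec n" "length ws = n"
    using gram_schmidt_result[OF b(1-3) ws_def] b(5) by auto
  have n0: "n \<noteq> 0" using v by auto
  then obtain vs where bv: "b = v # vs" using b(4,5) by (cases b) auto
  have hdws: "ws ! 0 = v" using gram_schmidt_hd[OF v(1), of vs] ws(3) n0 bv unfolding ws_def
    by (metis hd_conv_nth length_0_conv)
  define nr where "nr i = (\<Sum>a<n. (cmod (ws ! i $ a))^2)" for i
  define c where "c i = complex_of_real (1 / sqrt (nr i))" for i
  have wsc: "\<And>i. i < n \<Longrightarrow> ws ! i \<in> carrier_vec n" using ws by auto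
  have self: "ws ! i \<bullet>c ws ! i = complex_of_real (nr i)" if "i < n" for i
  proof -
    have "ws ! i \<bullet>c ws ! i = (\<Sum>a<n. ws ! i $ a * cnj (ws ! i $ a))"
      using wsc[OF that] by (subst cscalar_sum) auto
    also have "\<dots> = (\<Sum>a<n. complex_of_real ((cmod (ws ! i $ a))^2))"
      by (intro sum.cong refl) (simp add: complex_norm_square[symmetric])
    finally show ?thesis unfolding nr_def by simp
  qed
  have nrpos: "0 < nr i" if "i < n" for i
  proof -
    have "ws ! i \<bullet>c ws ! i \<noteq> 0" using corthogonalD[OF ws(1), of i i] ws(3) that by auto
    then have "nr i \<noteq> 0" using self[OF that] by auto
    moreover have "0 \<le> nr i" unfolding nr_def by (intro sum_nonneg) auto
    ultimately show ?thesis by simp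
  qed
  define U where "U = mat n n (\<lambda>(a,i). c i * ws ! i $ a)"
  have Uc: "U \<in> carrier_mat n n" unfolding U_def by simp
  have UU: "adj U * U = 1\<^sub>m n"
  proof (rule eq_matI)
    fix i j assume "i < dim_row (1\<^sub>m n)" "j < dim_col (1\<^sub>m n)"
    then have i: "i < n" and j: "j < n" by auto
    have "(adj U * U) $$ (i,j) = (\<Sum>a<n. cnj (c i * ws ! i $ a) * (c j * ws ! j $ a))"
      using i j Uc by (simp add: index_mult_mat scalar_prod_def row_def col_def lessThan_atLeast0 U_def)
    also have "\<dots> = cnj (c i) * c j * (\<Sum>a<n. ws ! j $ a * cnj (ws ! i $ a))"
      by (simp add: sum_distrib_left algebra_simps)
    also have "(\<Sum>a<n. ws ! j $ a * cnj (ws ! i $ a)) = ws ! j \<bullet>c ws ! i"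
      using wsc[OF i] wsc[OF j] by (subst cscalar_sum) auto
    also have "cnj (c i) * c j * (ws ! j \<bullet>c ws ! i) = 1\<^sub>m n $$ (i,j)"
    proof (cases "i = j")
      case True
      have "cnj (c i) * c i * complex_of_real (nr i) = complex_of_real ((1 / sqrt (nr i)) * (1 / sqrt (nr i)) * nr i)"
        by (simp only: c_def complex_cnj_complex_of_real of_real_mult)
      also have "(1 / sqrt (nr i)) * (1 / sqrt (nr i)) * nr i = 1"
        using nrpos[OF i] by (simp add: field_simps)
      finally show ?thesis using True self[OF i] i by simp
    next
      case False
      then have "ws ! j \<bullet>c ws ! i = 0" using corthogonalD[OF ws(1), of j i] ws(3) i j by auto
      then show ?thesis using False i j by simp
    qed
    finally show "(adj U * U) $$ (i,j) = 1\<^sub>m n $$ (i,j)" .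
  qed (use Uc in auto)
  have UU2: "U * adj U = 1\<^sub>m n"
    by (rule mat_mult_left_right_inverse[OF _ Uc UU]) (use Uc in simp)
  have "unitary_mat n U" unfolding unitary_mat_def using Uc UU UU2 by auto
  moreover have "\<forall>a<n. U $$ (a,0) = c 0 * v $ a" using hdws n0 unfolding U_def by auto
  ultimately show ?thesis by blast
qed

lemma assoc4:
  assumes "A \<in> carrier_mat n n" "B \<in> carrier_mat n n" "C \<in> carrier_mat n n"
  shows "A * B * C = A * (B * C)"
  using assoc_mult_mat[OF assms] .

lemma hermitian_spectral:
  fixes A :: "complex mat"
  assumes "A \<in> carrier_mat n n" "adj A = A" "char_poly A = (\<Prod>e\<leftarrow>es. [:-e, 1:])" "length es = n"
  shows "\<exists>V. unitary_mat n V \<and> A = V * diag_of n (\<lambda>i. es ! i) * adj V"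
  using assms
proof (induction es arbitrary: n A)
  case Nil
  then have n: "n = 0" by simp
  show ?case
    by (rule exI[of _ "1\<^sub>m 0"]) (use Nil n in \<open>auto simp: unitary_mat_def diag_of_def intro!: eq_matI\<close>)
next
  case (Cons e es n A)
  define n1 where "n1 = length es"
  have n: "n = Suc n1" using Cons.prems(4) unfolding n1_def by simp
  have A: "A \<in> carrier_mat n n" and herm: "adj A = A" using Cons.prems by auto
  have cp: "char_poly A = [:-e, 1:] * (\<Prod>e\<leftarrow>es. [:-e, 1:])" using Cons.prems(3) by simp
  have ev: "eigenvalue A e" unfolding eigenvalue_root_char_poly[OF A] cp by simp
  define v where "v = find_eigenvector A e"
  have "eigenvector A v e" using find_eigenvector[OF A ev] unfolding v_def .
  then have v: "v \<in> carrier_vec n" "v \<noteq> 0\<^sub>v n" "A *\<^sub>v v = e \<cdot>\<^sub>v v"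
    unfolding eigenvector_def using A by auto
  obtain U cc where U: "unitary_mat n U" and Ucol: "\<And>a. a < n \<Longrightarrow> U $$ (a,0) = cc * v $ a"
    using unitary_first_col[OF v(1,2)] by blast
  have Uc: "U \<in> carrier_mat n n" and UU: "U * adj U = 1\<^sub>m n" and UU': "adj U * U = 1\<^sub>m n"
    using U unfolding unitary_mat_def by auto
  have aUc: "adj U \<in> carrier_mat n n" using Uc by simp
  have AU0: "(A * U) $$ (a,0) = e * U $$ (a,0)" if a: "a < n" for a
  proof -
    have "(A * U) $$ (a,0) = (\<Sum>b<n. A $$ (a,b) * (cc * v $ b))"
      using a A Uc Ucol n by (simp add: index_mult_mat scalar_prod_def row_def col_def lessThan_atLeast0)
    also have "\<dots> = cc * (\<Sum>b<n. A $$ (a,b) * v $ b)" by (simp add: sum_distrib_left algebra_simps)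
    also have "(\<Sum>b<n. A $$ (a,b) * v $ b) = (A *\<^sub>v v) $ a"
      using a A v(1) by (simp add: scalar_prod_def row_def lessThan_atLeast0)
    also have "\<dots> = e * v $ a" using v a by simp
    finally show ?thesis using Ucol[OF a] by simp
  qed
  define A' where "A' = adj U * A * U"
  have A'c: "A' \<in> carrier_mat n n" unfolding A'_def using A Uc by auto
  have A'col: "A' $$ (i,0) = (if i = 0 then e else 0)" if i: "i < n" for i
  proof -
    have "A' = adj U * (A * U)" unfolding A'_def using assoc4[OF aUc A Uc] .
    then have "A' $$ (i,0) = (\<Sum>a<n. cnj (U $$ (a,i)) * (A * U) $$ (a,0))"
      using i A Uc n by (simp add: index_mult_mat scalar_prod_def row_def col_def lessThan_atLeast0)
    also have "\<dots> = e * (\<Sum>a<n. cnj (U $$ (a,i)) * U $$ (a,0))"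
      using AU0 by (simp add: sum_distrib_left algebra_simps)
    also have "(\<Sum>a<n. cnj (U $$ (a,i)) * U $$ (a,0)) = (adj U * U) $$ (i,0)"
      using i Uc n by (simp add: index_mult_mat scalar_prod_def row_def col_def lessThan_atLeast0)
    also have "\<dots> = (if i = 0 then 1 else 0)" using UU' i n by simp
    finally show ?thesis by simp
  qed
  have A'herm: "adj A' = A'"
  proof -
    have "adj A' = adj U * adj (adj U * A)" unfolding A'_def by (rule adj_mult) (use aUc A Uc in auto)
    also have "adj (adj U * A) = adj A * adj (adj U)" using adj_mult[OF aUc A] .
    also have "\<dots> = A * U" using herm by simp
    also have "adj U * (A * U) = A'" unfolding A'_def using assoc4[OF aUc A Uc] by simp
    finally show ?thesis .
  qed
  have A'row: "A' $$ (0,j) = 0" if j: "j < n" "j \<noteq> 0" for j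
  proof -
    have "A' $$ (0,j) = adj A' $$ (0,j)" using A'herm by simp
    also have "\<dots> = cnj (A' $$ (j,0))" using A'c j n by simp
    also have "\<dots> = 0" using A'col[OF j(1)] j by simp
    finally show ?thesis .
  qed
  define E1 :: "complex mat" where "E1 = mat 1 1 (\<lambda>_. e)"
  define A3 where "A3 = mat n1 n1 (\<lambda>(i,j). A' $$ (Suc i, Suc j))"
  have A3c: "A3 \<in> carrier_mat n1 n1" unfolding A3_def by simp
  have E1c: "E1 \<in> carrier_mat 1 1" unfolding E1_def by simp
  have A'blk: "A' = four_block_mat E1 (0\<^sub>m 1 n1) (0\<^sub>m n1 1) A3"
  proof (rule eq_matI)
    fix i j assume ij: "i < dim_row (four_block_mat E1 (0\<^sub>m 1 n1) (0\<^sub>m n1 1) A3)"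
      "j < dim_col (four_block_mat E1 (0\<^sub>m 1 n1) (0\<^sub>m n1 1) A3)"
    then have i: "i < n" and j: "j < n" using E1c A3c n by auto
    show "A' $$ (i,j) = four_block_mat E1 (0\<^sub>m 1 n1) (0\<^sub>m n1 1) A3 $$ (i,j)"
      using ij E1c A3c A'col[OF i] A'row[OF j] A'col i j n
      by (cases "i = 0"; cases "j = 0") (auto simp: E1_def A3_def)
  qed (use A'c E1c A3c n in auto)
  have A3herm: "adj A3 = A3"
  proof (rule eq_matI)
    fix i j assume "i < dim_row A3" "j < dim_col A3"
    then have i: "i < n1" and j: "j < n1" using A3c by auto
    have "A' $$ (Suc i, Suc j) = adj A' $$ (Suc i, Suc j)" using A'herm by simp
    also have "\<dots> = cnj (A' $$ (Suc j, Suc i))" using A'c i j n by simp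
    finally show "adj A3 $$ (i,j) = A3 $$ (i,j)" using i j unfolding A3_def by simp
  qed (use A3c in auto)
  have sim: "similar_mat A' A"
    unfolding similar_mat_def similar_mat_wit_def
    by (rule exI[of _ "adj U"], rule exI[of _ U]) (use A'c A Uc aUc UU UU' in \<open>auto simp: A'_def Let_def\<close>)
  have "char_poly A' = char_poly E1 * char_poly A3"
    unfolding A'blk by (rule char_poly_four_block_zeros_col[OF E1c _ A3c]) simp
  moreover have "char_poly E1 = [:-e, 1:]"
    by (simp add: E1_def char_poly_defs det_def sign_def)
  moreover have "char_poly A' = char_poly A" using char_poly_similar[OF sim] .
  ultimately have "[:-e, 1:] * char_poly A3 = [:-e, 1:] * (\<Prod>e\<leftarrow>es. [:-e, 1:])" using cp by simp
  then have cp3: "char_poly A3 = (\<Prod>e\<leftarrow>es. [:-e, 1:])"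
    by (metis mult_cancel_left pCons_eq_0_iff zero_neq_one)
  obtain V3 where V3: "unitary_mat n1 V3" and A3eq: "A3 = V3 * diag_of n1 (\<lambda>i. es ! i) * adj V3"
    using Cons.IH[OF A3c A3herm cp3] n1_def by blast
  have V3c: "V3 \<in> carrier_mat n1 n1" and V3V3: "V3 * adj V3 = 1\<^sub>m n1" "adj V3 * V3 = 1\<^sub>m n1"
    using V3 unfolding unitary_mat_def by auto
  have aV3c: "adj V3 \<in> carrier_mat n1 n1" using V3c by simp
  define D3 where "D3 = diag_of n1 (\<lambda>i. es ! i)"
  have D3c: "D3 \<in> carrier_mat n1 n1" unfolding D3_def diag_of_def by simp
  define Bk where "Bk = four_block_mat (1\<^sub>m 1) (0\<^sub>m 1 n1) (0\<^sub>m n1 1) V3"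
  have aBk: "adj Bk = four_block_mat (1\<^sub>m 1) (0\<^sub>m 1 n1) (0\<^sub>m n1 1) (adj V3)"
    by (rule eq_matI) (use V3c in \<open>auto simp: Bk_def\<close>)
  have Bkc: "Bk \<in> carrier_mat n n" unfolding Bk_def using V3c n by auto
  note one1 = one_carrier_mat[of 1] and z1 = zero_carrier_mat[of 1 n1] and z2 = zero_carrier_mat[of n1 1]
  have Bk1: "Bk * adj Bk = 1\<^sub>m n"
    unfolding aBk unfolding Bk_def
    by (subst mult_four_block_mat[OF one1 z1 z2 V3c one1 z1 z2 aV3c]) (use V3c aV3c V3V3 n in auto)
  have Bk2: "adj Bk * Bk = 1\<^sub>m n"
    unfolding aBk unfolding Bk_def
    by (subst mult_four_block_mat[OF one1 z1 z2 aV3c one1 z1 z2 V3c]) (use V3c aV3c V3V3 n in auto)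
  have Bku: "unitary_mat n Bk" unfolding unitary_mat_def using Bkc Bk1 Bk2 by auto
  define D where "D = diag_of n (\<lambda>i. (e # es) ! i)"
  have Dblk: "D = four_block_mat E1 (0\<^sub>m 1 n1) (0\<^sub>m n1 1) D3"
    by (rule eq_matI) (auto simp: D_def D3_def E1_def diag_of_def n nth_Cons' less_Suc_eq_0_disj)
  have BD: "Bk * D = four_block_mat E1 (0\<^sub>m 1 n1) (0\<^sub>m n1 1) (V3 * D3)"
    unfolding Bk_def Dblk
    by (subst mult_four_block_mat[OF one1 z1 z2 V3c E1c z1 z2 D3c]) (use V3c D3c E1c in auto)
  have "Bk * D * adj Bk = four_block_mat E1 (0\<^sub>m 1 n1) (0\<^sub>m n1 1) (V3 * D3 * adj V3)"
    unfolding aBk BD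
    by (subst mult_four_block_mat[OF E1c z1 z2 mult_carrier_mat[OF V3c D3c] one1 z1 z2 aV3c]) (use V3c D3c E1c aV3c in auto)
  then have BDB: "Bk * D * adj Bk = A'" unfolding A'blk A3eq D3_def by simp
  define V where "V = U * Bk"
  have Vu: "unitary_mat n V" unfolding V_def by (rule unitary_mult[OF U Bku])
  have Dc: "D \<in> carrier_mat n n" unfolding D_def diag_of_def by simp
  have aBkc: "adj Bk \<in> carrier_mat n n" using Bkc by simp
  have "A = (U * adj U) * A * (U * adj U)" using UU A by simp
  also have "\<dots> = U * A' * adj U"
  proof -
    have "(U * adj U) * A * (U * adj U) = U * (adj U * A) * (U * adj U)"
      by (subst assoc4[OF Uc aUc A]) simp
    also have "\<dots> = U * ((adj U * A) * (U * adj U))"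
      by (rule assoc4) (use Uc aUc A in auto)
    also have "(adj U * A) * (U * adj U) = ((adj U * A) * U) * adj U"
      by (rule sym, rule assoc4) (use Uc aUc A in auto)
    also have "U * (((adj U * A) * U) * adj U) = U * A' * adj U"
      unfolding A'_def by (rule sym, rule assoc4) (use Uc aUc A in auto)
    finally show ?thesis .
  qed
  also have "\<dots> = U * (Bk * D * adj Bk) * adj U" using BDB by simp
  also have "\<dots> = V * D * adj V"
  proof -
    have "adj V = adj Bk * adj U" unfolding V_def using adj_mult[OF Uc Bkc] .
    moreover have "U * (Bk * D * adj Bk) * adj U = (U * Bk) * D * (adj Bk * adj U)"
    proof -
      have "U * (Bk * D * adj Bk) = U * (Bk * D) * adj Bk"
        by (rule sym, rule assoc4) (use Uc Bkc Dc aBkc in auto)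
      also have "U * (Bk * D) = U * Bk * D" by (rule sym, rule assoc4) (use Uc Bkc Dc in auto)
      finally have "U * (Bk * D * adj Bk) * adj U = U * Bk * D * adj Bk * adj U" by simp
      also have "\<dots> = (U * Bk * D) * (adj Bk * adj U)"
        by (rule assoc4) (use Uc Bkc Dc aBkc aUc in auto)
      finally show ?thesis by simp
    qed
    ultimately show ?thesis unfolding V_def by simp
  qed
  finally show ?case using Vu unfolding D_def by blast
qed


definition cchan :: "nat \<Rightarrow> (nat \<Rightarrow> nat \<Rightarrow> real) \<Rightarrow> complex mat \<Rightarrow> complex mat" where
  "cchan d G M = mat d d (\<lambda>(k,l). if k = l then (\<Sum>i<d. complex_of_real (G k i) * M $$ (i,i)) else 0)"

lemma sum_split_add: "(\<Sum>r<m+(d::nat). f r) = (\<Sum>r<m. f r) + (\<Sum>k<d. f (m+k))"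
  by (induction d) (auto simp: add.assoc)

lemma sum_split_mult: "(\<Sum>r<(n::nat)*d. f r) = (\<Sum>a<n. \<Sum>k<d. f (a*d + k))"
proof (induction n)
  case (Suc n)
  have "(\<Sum>r<Suc n * d. f r) = (\<Sum>r<n*d + d. f r)" by (simp add: add.commute)
  also have "\<dots> = (\<Sum>r<n*d. f r) + (\<Sum>k<d. f (n*d+k))" by (rule sum_split_add)
  finally show ?case using Suc by simp
qed simp

lemma divmod_blk: "k < d \<Longrightarrow> (a*d + k) div d = (a::nat)" "k < d \<Longrightarrow> (a*d + k) mod d = (k::nat)"
  by auto

lemma blk_lt: "a < n \<Longrightarrow> k < d \<Longrightarrow> a*d + k < n*(d::nat)"
proof -
  assume "a < n" "k < d"
  then have "a*d + k < a*d + d" by simp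
  also have "\<dots> = Suc a * d" by simp
  also have "\<dots> \<le> n * d" using \<open>a < n\<close> by (intro mult_right_mono) auto
  finally show ?thesis .
qed

definition qf :: "nat \<Rightarrow> complex mat \<Rightarrow> complex vec \<Rightarrow> complex" where
  "qf N M v = (\<Sum>r<N. \<Sum>c<N. cnj (v $ r) * M $$ (r,c) * v $ c)"

lemma qf_eq:
  assumes "M \<in> carrier_mat N N" "v \<in> carrier_vec N"
  shows "conjugate v \<bullet> (M *\<^sub>v v) = qf N M v"
  unfolding qf_def using assms
  by (auto simp: scalar_prod_def mult_mat_vec_def row_def lessThan_atLeast0 sum_distrib_left
      intro!: sum.cong simp del: ) 

lemma cchan_amp_index:
  assumes d: "0 < d" and rc: "r < n*d" "c < n*d"
  shows "ampliation d n (cchan d G) X $$ (r,c) = (if r mod d = c mod d then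
     (\<Sum>i<d. complex_of_real (G (r mod d) i) * X $$ ((r div d)*d + i, (c div d)*d + i)) else 0)"
  using assms by (simp add: ampliation_def cchan_def)

lemma herm_entry:
  assumes "adj X = X" "X \<in> carrier_mat N N" "x < N" "y < N"
  shows "cnj (X $$ (x,y)) = X $$ (y,x)"
proof -
  have "X $$ (y,x) = adj X $$ (y,x)" by (simp only: assms(1))
  also have "\<dots> = cnj (X $$ (x,y))" using assms(2-4) by (intro adj_index) auto
  finally show ?thesis by simp
qed

lemma psd_herm: "psd N X \<Longrightarrow> adj X = X" unfolding psd_def by auto

lemma psd_qf: "psd N X \<Longrightarrow> v \<in> carrier_vec N \<Longrightarrow> Im (qf N X v) = 0 \<and> 0 \<le> Re (qf N X v)"
  unfolding psd_def using qf_eq by auto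

lemma cchan_cp:
  assumes G0: "\<forall>k<d. \<forall>i<d. 0 \<le> G k i" and X: "psd (n*d) X"
  shows "psd (n*d) (ampliation d n (cchan d G) X)"
proof -
  define N where "N = n*d"
  define Y where "Y = ampliation d n (cchan d G) X"
  have Xc: "X \<in> carrier_mat N N" and Xh: "adj X = X" using X unfolding psd_def N_def by auto
  have Yc: "Y \<in> carrier_mat N N" unfolding Y_def N_def ampliation_def by simp
  show ?thesis
  proof (cases "d = 0")
    case True
    then have N0: "N = 0" unfolding N_def by simp
    have "adj Y = Y" by (rule eq_matI) (use Yc N0 in auto)
    moreover have "Im (conjugate v \<bullet> (Y *\<^sub>v v)) = 0 \<and> 0 \<le> Re (conjugate v \<bullet> (Y *\<^sub>v v))"
      if "v \<in> carrier_vec N" for v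
      using qf_eq[OF Yc that] N0 by (simp add: qf_def)
    ultimately show ?thesis unfolding psd_def Y_def[symmetric] N_def[symmetric] using Yc by auto
  next
    case False
    then have d: "0 < d" by simp
    have Yidx: "Y $$ (r,c) = (if r mod d = c mod d then
       (\<Sum>i<d. complex_of_real (G (r mod d) i) * X $$ ((r div d)*d + i, (c div d)*d + i)) else 0)"
      if "r < N" "c < N" for r c
      unfolding Y_def using cchan_amp_index[OF d] that unfolding N_def by blast
    have blk: "(r div d)*d + i < N" if "r < N" "i < d" for r i
    proof -
      have "r div d < n" using that d unfolding N_def by (simp add: less_mult_imp_div_less)
      then show ?thesis using blk_lt that unfolding N_def by blast
    qed
    have herm: "adj Y = Y"
    proof (rule eq_matI)
      fix r c assume "r < dim_row Y" "c < dim_col Y"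
      then have r: "r < N" and c: "c < N" using Yc by auto
      have "adj Y $$ (r,c) = cnj (Y $$ (c,r))" using r c Yc by simp
      also have "\<dots> = Y $$ (r,c)"
        using r c by (auto simp: Yidx herm_entry[OF Xh Xc] blk d)
      finally show "adj Y $$ (r,c) = Y $$ (r,c)" .
    qed (use Yc in auto)
    have form: "Im (conjugate v \<bullet> (Y *\<^sub>v v)) = 0 \<and> 0 \<le> Re (conjugate v \<bullet> (Y *\<^sub>v v))"
      if v: "v \<in> carrier_vec N" for v
    proof -
      define u where "u k i = vec N (\<lambda>s. if s mod d = i then v $ ((s div d)*d + k) else 0)" for k i
      have uc: "u k i \<in> carrier_vec N" for k i unfolding u_def by simp
      define w where "w a k = v $ (a*d + k)" for a k
      define T where "T k i a b = cnj (w a k) * X $$ (a*d + i, b*d + i) * w b k" for k i a b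
      have qfu: "qf N X (u k i) = (\<Sum>a<n. \<Sum>b<n. T k i a b)" if "k < d" "i < d" for k i
      proof -
        have "qf N X (u k i) = (\<Sum>a<n. \<Sum>i'<d. \<Sum>b<n. \<Sum>i''<d.
             cnj (u k i $ (a*d+i')) * X $$ (a*d+i', b*d+i'') * u k i $ (b*d+i''))"
          by (simp only: qf_def N_def sum_split_mult)
        also have "\<dots> = (\<Sum>a<n. \<Sum>i'<d. \<Sum>b<n. \<Sum>i''<d.
             (if i'' = i then (if i' = i then T k i a b else 0) else 0))"
          by (intro sum.cong refl) (auto simp: u_def T_def w_def blk_lt N_def)
        also have "\<dots> = (\<Sum>a<n. \<Sum>i'<d. \<Sum>b<n. (if i' = i then T k i a b else 0))"
          using that by (simp add: sum.delta)
        also have "\<dots> = (\<Sum>a<n. \<Sum>i'<d. (if i' = i then (\<Sum>b<n. T k i a b) else 0))"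
          by (intro sum.cong refl) auto
        also have "\<dots> = (\<Sum>a<n. \<Sum>b<n. T k i a b)"
          using that by (simp add: sum.delta)
        finally show ?thesis .
      qed
      have "conjugate v \<bullet> (Y *\<^sub>v v) = qf N Y v" by (rule qf_eq[OF Yc v])
      also have "\<dots> = (\<Sum>a<n. \<Sum>k<d. \<Sum>b<n. \<Sum>k'<d.
             cnj (w a k) * Y $$ (a*d+k, b*d+k') * w b k')"
        by (simp only: qf_def N_def w_def sum_split_mult)
      also have "\<dots> = (\<Sum>a<n. \<Sum>k<d. \<Sum>b<n. \<Sum>k'<d.
             (if k' = k then (\<Sum>i<d. complex_of_real (G k i) * T k i a b) else 0))"
      proof (intro sum.cong refl)
        fix a k b k' assume a: "a \<in> {..<n}" and k: "k \<in> {..<d}" and b: "b \<in> {..<n}" and k': "k' \<in> {..<d}"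
        have r: "a*d+k < N" and c: "b*d+k' < N" using a k b k' blk_lt unfolding N_def by auto
        show "cnj (w a k) * Y $$ (a*d+k, b*d+k') * w b k' =
             (if k' = k then (\<Sum>i<d. complex_of_real (G k i) * T k i a b) else 0)"
        proof -
          have Ye: "Y $$ (a*d+k, b*d+k') = (if k = k' then
              (\<Sum>i<d. complex_of_real (G k i) * X $$ (a*d + i, b*d + i)) else 0)"
            using Yidx[OF r c] k k' by (simp only: divmod_blk lessThan_iff)
          show ?thesis
          proof (cases "k' = k")
            case True
            then show ?thesis unfolding Ye T_def
              by (simp add: sum_distrib_left sum_distrib_right mult.assoc mult.left_commute)
          next
            case False then show ?thesis unfolding Ye by simp
          qed
        qed
      qed
      also have "\<dots> = (\<Sum>a<n. \<Sum>k<d. \<Sum>b<n. \<Sum>i<d. complex_of_real (G k i) * T k i a b)"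
        by (simp add: sum.delta)
      also have "\<dots> = (\<Sum>k<d. \<Sum>i<d. complex_of_real (G k i) * (\<Sum>a<n. \<Sum>b<n. T k i a b))"
      proof -
        have "(\<Sum>a<n. \<Sum>k<d. \<Sum>b<n. \<Sum>i<d. complex_of_real (G k i) * T k i a b)
            = (\<Sum>k<d. \<Sum>a<n. \<Sum>b<n. \<Sum>i<d. complex_of_real (G k i) * T k i a b)"
          by (rule sum.swap)
        also have "\<dots> = (\<Sum>k<d. \<Sum>a<n. \<Sum>i<d. \<Sum>b<n. complex_of_real (G k i) * T k i a b)"
          by (rule sum.cong[OF refl], rule sum.cong[OF refl], rule sum.swap)
        also have "\<dots> = (\<Sum>k<d. \<Sum>i<d. \<Sum>a<n. \<Sum>b<n. complex_of_real (G k i) * T k i a b)"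
          by (rule sum.cong[OF refl], rule sum.swap)
        finally show ?thesis by (simp add: sum_distrib_left)
      qed
      also have "\<dots> = (\<Sum>k<d. \<Sum>i<d. complex_of_real (G k i) * qf N X (u k i))"
        using qfu by simp
      finally have eq: "conjugate v \<bullet> (Y *\<^sub>v v) = (\<Sum>k<d. \<Sum>i<d. complex_of_real (G k i) * qf N X (u k i))" .
      have each: "Im (complex_of_real (G k i) * qf N X (u k i)) = 0 \<and> 0 \<le> Re (complex_of_real (G k i) * qf N X (u k i))"
        if "k < d" "i < d" for k i
        using psd_qf[OF X[folded N_def] uc[of k i]] G0 that by simp
      show ?thesis unfolding eq using each
        by (auto simp: Im_sum Re_sum intro!: sum_nonneg sum.neutral)
    qed
    show ?thesis unfolding psd_def Y_def[symmetric] N_def[symmetric] using Yc herm form by auto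
  qed
qed

lemma cchan_dims[simp]: "dim_row (cchan d G M) = d" "dim_col (cchan d G M) = d"
  unfolding cchan_def by auto

lemma cchan_carrier[simp]: "cchan d G M \<in> carrier_mat d d"
  unfolding cchan_def by simp

lemma cchan_index: "k < d \<Longrightarrow> l < d \<Longrightarrow> cchan d G M $$ (k,l) =
   (if k = l then (\<Sum>i<d. complex_of_real (G k i) * M $$ (i,i)) else 0)"
  unfolding cchan_def by simp

lemma cchan_qc:
  assumes G0: "\<forall>k<d. \<forall>i<d. 0 \<le> G k i" and G1: "\<forall>i<d. (\<Sum>k<d. G k i) = 1"
  shows "quantum_channel d (cchan d G)"
proof -
  have add: "cchan d G (X + Y) = cchan d G X + cchan d G Y"
    if "X \<in> carrier_mat d d" "Y \<in> carrier_mat d d" for X Y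
    by (rule eq_matI) (use that in \<open>auto simp: cchan_index sum.distrib distrib_left\<close>)
  have smult: "cchan d G (c \<cdot>\<^sub>m X) = c \<cdot>\<^sub>m cchan d G X" if "X \<in> carrier_mat d d" for X c
    by (rule eq_matI) (use that in \<open>auto simp: cchan_index sum_distrib_left algebra_simps\<close>)
  have tr: "mtrace (cchan d G X) = mtrace X" if "X \<in> carrier_mat d d" for X
  proof -
    have "mtrace (cchan d G X) = (\<Sum>k<d. \<Sum>i<d. complex_of_real (G k i) * X $$ (i,i))"
      unfolding mtrace_def by (simp add: cchan_index)
    also have "\<dots> = (\<Sum>i<d. \<Sum>k<d. complex_of_real (G k i) * X $$ (i,i))" by (rule sum.swap)
    also have "\<dots> = (\<Sum>i<d. complex_of_real (\<Sum>k<d. G k i) * X $$ (i,i))"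
      by (simp add: sum_distrib_right)
    also have "\<dots> = (\<Sum>i<d. X $$ (i,i))" using G1 by simp
    finally show ?thesis unfolding mtrace_def using that by simp
  qed
  show ?thesis unfolding quantum_channel_def
    using add smult tr cchan_cp[OF G0] by auto
qed


fun msum :: "nat \<Rightarrow> (nat \<Rightarrow> complex mat) \<Rightarrow> nat \<Rightarrow> complex mat" where
  "msum d f 0 = 0\<^sub>m d d"
| "msum d f (Suc m) = msum d f m + f m"

lemma msum_carrier: "(\<forall>j<m. f j \<in> carrier_mat d d) \<Longrightarrow> msum d f m \<in> carrier_mat d d"
  by (induction m) auto

lemma msum_index: "(\<forall>j<m. f j \<in> carrier_mat d d) \<Longrightarrow> a < d \<Longrightarrow> b < d \<Longrightarrow>
   msum d f m $$ (a,b) = (\<Sum>j<m. f j $$ (a,b))"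
proof (induction m)
  case (Suc m)
  have c1: "msum d f m \<in> carrier_mat d d" using Suc.prems(1) msum_carrier by auto
  have c2: "f m \<in> carrier_mat d d" using Suc.prems(1) by simp
  have "(msum d f m + f m) $$ (a,b) = msum d f m $$ (a,b) + f m $$ (a,b)"
    by (rule index_add_mat(1)) (use c2 Suc.prems in auto)
  then show ?case using Suc c1 by simp
qed simp

lemma chan_zero:
  assumes "quantum_channel d \<Lambda>"
  shows "\<Lambda> (0\<^sub>m d d) = 0\<^sub>m d d"
proof -
  have c: "\<Lambda> (0\<^sub>m d d) \<in> carrier_mat d d" and s: "\<Lambda> (0 \<cdot>\<^sub>m 0\<^sub>m d d) = 0 \<cdot>\<^sub>m \<Lambda> (0\<^sub>m d d)"
    using assms zero_carrier_mat[of d d] unfolding quantum_channel_def by blast+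
  have "0 \<cdot>\<^sub>m (0\<^sub>m d d :: complex mat) = 0\<^sub>m d d" by (rule eq_matI) auto
  moreover have "0 \<cdot>\<^sub>m \<Lambda> (0\<^sub>m d d) = 0\<^sub>m d d" using c by (intro eq_matI) auto
  ultimately show ?thesis using s by simp
qed

lemma chan_msum:
  assumes Q: "quantum_channel d \<Lambda>" and P: "\<forall>j<m. P j \<in> carrier_mat d d"
  shows "\<Lambda> (msum d (\<lambda>j. c j \<cdot>\<^sub>m P j) m) = msum d (\<lambda>j. c j \<cdot>\<^sub>m \<Lambda> (P j)) m"
  using P
proof (induction m)
  case 0 then show ?case using chan_zero[OF Q] by simp
next
  case (Suc m)
  have c1: "msum d (\<lambda>j. c j \<cdot>\<^sub>m P j) m \<in> carrier_mat d d" using Suc.prems by (intro msum_carrier) auto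
  have c2: "c m \<cdot>\<^sub>m P m \<in> carrier_mat d d" using Suc.prems by auto
  have "\<Lambda> (msum d (\<lambda>j. c j \<cdot>\<^sub>m P j) (Suc m)) = \<Lambda> (msum d (\<lambda>j. c j \<cdot>\<^sub>m P j) m) + \<Lambda> (c m \<cdot>\<^sub>m P m)"
    using Q c1 c2 unfolding quantum_channel_def by simp
  also have "\<Lambda> (c m \<cdot>\<^sub>m P m) = c m \<cdot>\<^sub>m \<Lambda> (P m)" using Q Suc.prems unfolding quantum_channel_def by simp
  finally show ?case using Suc by simp
qed

lemma conj_entry:
  assumes "W \<in> carrier_mat d d" "M \<in> carrier_mat d d" "k < d" "l < d"
  shows "(adj W * M * W) $$ (k,l) = (\<Sum>a<d. \<Sum>b<d. cnj (W $$ (a,k)) * M $$ (a,b) * W $$ (b,l))"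
proof -
  have "(adj W * M * W) $$ (k,l) = (\<Sum>b<d. (adj W * M) $$ (k,b) * W $$ (b,l))"
    using assms by (simp add: index_mult_mat scalar_prod_def row_def col_def lessThan_atLeast0)
  also have "\<dots> = (\<Sum>b<d. (\<Sum>a<d. cnj (W $$ (a,k)) * M $$ (a,b)) * W $$ (b,l))"
    using assms by (intro sum.cong refl) (simp add: index_mult_mat scalar_prod_def row_def col_def lessThan_atLeast0)
  also have "\<dots> = (\<Sum>b<d. \<Sum>a<d. cnj (W $$ (a,k)) * M $$ (a,b) * W $$ (b,l))"
    by (simp add: sum_distrib_right)
  also have "\<dots> = (\<Sum>a<d. \<Sum>b<d. cnj (W $$ (a,k)) * M $$ (a,b) * W $$ (b,l))" by (rule sum.swap)
  finally show ?thesis .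
qed

lemma conj_entry_qf:
  assumes "W \<in> carrier_mat d d" "M \<in> carrier_mat d d" "k < d"
  shows "(adj W * M * W) $$ (k,k) = qf d M (col W k)"
  unfolding conj_entry[OF assms(1,2,3,3)] qf_def using assms by simp

definition proj :: "nat \<Rightarrow> complex vec \<Rightarrow> complex mat" where
  "proj d v = mat d d (\<lambda>(a,b). v $ a * cnj (v $ b))"

lemma proj_carrier[simp]: "proj d v \<in> carrier_mat d d" unfolding proj_def by simp

lemma proj_psd: "psd d (proj d v)"
proof -
  have herm: "adj (proj d v) = proj d v" by (rule eq_matI) (auto simp: proj_def)
  have "Im (conjugate u \<bullet> (proj d v *\<^sub>v u)) = 0 \<and> 0 \<le> Re (conjugate u \<bullet> (proj d v *\<^sub>v u))"
    if u: "u \<in> carrier_vec d" for u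
  proof -
    define z where "z = (\<Sum>r<d. cnj (u $ r) * v $ r)"
    have "qf d (proj d v) u = (\<Sum>r<d. \<Sum>c<d. (cnj (u $ r) * v $ r) * (cnj (v $ c) * u $ c))"
      unfolding qf_def proj_def by (simp add: algebra_simps)
    also have "\<dots> = z * cnj z" unfolding z_def by (simp add: sum_distrib_left sum_distrib_right mult.commute)
    also have "\<dots> = complex_of_real ((cmod z)^2)" by (rule complex_norm_square[symmetric])
    finally have "qf d (proj d v) u = complex_of_real ((cmod z)^2)" .
    then show ?thesis using qf_eq[OF proj_carrier u] by simp
  qed
  then show ?thesis unfolding psd_def using herm by auto
qed

lemma chan_pos:
  assumes Q: "quantum_channel d \<Lambda>" and P: "psd d M"
  shows "psd d (\<Lambda> M)"
proof -
  have Mc: "M \<in> carrier_mat d d" using P unfolding psd_def by auto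
  have LMc: "\<Lambda> M \<in> carrier_mat d d" using Q Mc unfolding quantum_channel_def by auto
  have "psd (1*d) M \<longrightarrow> psd (1*d) (ampliation d 1 \<Lambda> M)" using Q unfolding quantum_channel_def by blast
  then have "psd (1*d) (ampliation d 1 \<Lambda> M)" using P by simp
  moreover have "ampliation d 1 \<Lambda> M = \<Lambda> M"
  proof -
    have inner: "mat d d (\<lambda>(i,j). M $$ (0 * d + i, 0 * d + j)) = M" by (rule eq_matI) (use Mc in auto)
    show ?thesis
    proof (rule eq_matI)
      fix r c assume "r < dim_row (\<Lambda> M)" "c < dim_col (\<Lambda> M)"
      then have r: "r < d" and c: "c < d" using LMc by auto
      then have "r div d = 0" "c div d = 0" "r mod d = r" "c mod d = c" by auto
      then show "ampliation d 1 \<Lambda> M $$ (r,c) = \<Lambda> M $$ (r,c)"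
        unfolding ampliation_def using r c inner by simp
    qed (use LMc in \<open>auto simp: ampliation_def\<close>)
  qed
  ultimately show ?thesis by simp
qed


lemma ent_msum:
  assumes W: "W \<in> carrier_mat d d" and P: "\<forall>j<m. P j \<in> carrier_mat d d" and k: "k < d"
  shows "(adj W * msum d (\<lambda>j. c j \<cdot>\<^sub>m P j) m * W) $$ (k,k) = (\<Sum>j<m. c j * (adj W * P j * W) $$ (k,k))"
proof -
  have Pc: "\<forall>j<m. c j \<cdot>\<^sub>m P j \<in> carrier_mat d d" using P by auto
  have Mc: "msum d (\<lambda>j. c j \<cdot>\<^sub>m P j) m \<in> carrier_mat d d" using msum_carrier[OF Pc] .
  have "(adj W * msum d (\<lambda>j. c j \<cdot>\<^sub>m P j) m * W) $$ (k,k)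
     = (\<Sum>a<d. \<Sum>b<d. cnj (W $$ (a,k)) * (\<Sum>j<m. c j * P j $$ (a,b)) * W $$ (b,k))"
  proof -
    have mi: "msum d (\<lambda>j. c j \<cdot>\<^sub>m P j) m $$ (a,b) = (\<Sum>j<m. c j * P j $$ (a,b))" if "a<d" "b<d" for a b
      using msum_index[OF Pc that] P that by (auto intro!: sum.cong)
    show ?thesis unfolding conj_entry[OF W Mc k k] by (intro sum.cong refl) (simp add: mi)
  qed
  also have "\<dots> = (\<Sum>a<d. \<Sum>b<d. \<Sum>j<m. c j * (cnj (W $$ (a,k)) * P j $$ (a,b) * W $$ (b,k)))"
    by (simp add: sum_distrib_left sum_distrib_right algebra_simps)
  also have "\<dots> = (\<Sum>j<m. \<Sum>a<d. \<Sum>b<d. c j * (cnj (W $$ (a,k)) * P j $$ (a,b) * W $$ (b,k)))"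
  proof -
    have "(\<Sum>a<d. \<Sum>b<d. \<Sum>j<m. c j * (cnj (W $$ (a,k)) * P j $$ (a,b) * W $$ (b,k)))
        = (\<Sum>a<d. \<Sum>j<m. \<Sum>b<d. c j * (cnj (W $$ (a,k)) * P j $$ (a,b) * W $$ (b,k)))"
      by (rule sum.cong[OF refl], rule sum.swap)
    also have "\<dots> = (\<Sum>j<m. \<Sum>a<d. \<Sum>b<d. c j * (cnj (W $$ (a,k)) * P j $$ (a,b) * W $$ (b,k)))"
      by (rule sum.swap)
    finally show ?thesis .
  qed
  also have "\<dots> = (\<Sum>j<m. c j * (adj W * P j * W) $$ (k,k))"
    using P by (intro sum.cong refl) (simp add: conj_entry[OF W _ k k] sum_distrib_left)
  finally show ?thesis .
qed

lemma udiag_msum: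
  assumes Q: "Q \<in> carrier_mat d d"
  shows "Q * diag_of d f * adj Q = msum d (\<lambda>j. f j \<cdot>\<^sub>m proj d (col Q j)) d"
proof (rule eq_matI)
  have Pc: "\<forall>j<d. f j \<cdot>\<^sub>m proj d (col Q j) \<in> carrier_mat d d" by auto
  fix a b assume ab: "a < dim_row (msum d (\<lambda>j. f j \<cdot>\<^sub>m proj d (col Q j)) d)"
    "b < dim_col (msum d (\<lambda>j. f j \<cdot>\<^sub>m proj d (col Q j)) d)"
  then have a: "a < d" and b: "b < d" using msum_carrier[OF Pc] by auto
  have "(Q * diag_of d f * adj Q) $$ (a,b) = (\<Sum>j<d. (Q * diag_of d f) $$ (a,j) * cnj (Q $$ (b,j)))"
    using Q a b by (simp add: index_mult_mat scalar_prod_def row_def col_def lessThan_atLeast0 diag_of_def)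
  also have "\<dots> = (\<Sum>j<d. Q $$ (a,j) * f j * cnj (Q $$ (b,j)))"
  proof (intro sum.cong refl)
    fix j assume j: "j \<in> {..<d}"
    have "(Q * diag_of d f) $$ (a,j) = (\<Sum>l<d. Q $$ (a,l) * (if l = j then f l else 0))"
      using Q a j by (simp add: index_mult_mat scalar_prod_def row_def col_def lessThan_atLeast0 diag_of_def)
    also have "\<dots> = Q $$ (a,j) * f j" using j by (simp add: if_distrib sum.delta cong: if_cong)
    finally show "(Q * diag_of d f) $$ (a,j) * cnj (Q $$ (b,j)) = Q $$ (a,j) * f j * cnj (Q $$ (b,j))" by simp
  qed
  also have "\<dots> = msum d (\<lambda>j. f j \<cdot>\<^sub>m proj d (col Q j)) d $$ (a,b)"
    using msum_index[OF Pc a b] Q a b by (auto simp: proj_def algebra_simps intro!: sum.cong)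
  finally show "(Q * diag_of d f * adj Q) $$ (a,b) = msum d (\<lambda>j. f j \<cdot>\<^sub>m proj d (col Q j)) d $$ (a,b)" .
qed (use Q msum_carrier[of d "\<lambda>j. f j \<cdot>\<^sub>m proj d (col Q j)" d] in \<open>auto simp: diag_of_def\<close>)

lemma diag_of_one: "diag_of d (\<lambda>_. 1) = 1\<^sub>m d"
  by (rule eq_matI) (auto simp: diag_of_def)

lemma sum_ent:
  assumes W: "unitary_mat d W" and M: "M \<in> carrier_mat d d"
  shows "(\<Sum>k<d. (adj W * M * W) $$ (k,k)) = mtrace M"
proof -
  have Wc: "W \<in> carrier_mat d d" using W unfolding unitary_mat_def by auto
  have "(adj W * M * W) \<in> carrier_mat d d" using Wc M by auto
  then have dr: "dim_row (adj W * M * W) = d" using Wc by simp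
  have "(\<Sum>k<d. (adj W * M * W) $$ (k,k)) = mtrace (adj W * M * W)" unfolding mtrace_def dr ..
  also have "\<dots> = mtrace M" by (rule mtrace_conj[OF W M])
  finally show ?thesis .
qed

definition tv :: "nat \<Rightarrow> (nat \<Rightarrow> real) \<Rightarrow> real \<Rightarrow> nat \<Rightarrow> real" where
  "tv d E \<beta> i = exp (- \<beta> * E i) / (\<Sum>k<d. exp (- \<beta> * E k))"

lemma gibbs_tv: "gibbs d E \<beta> = diag_of d (\<lambda>i. complex_of_real (tv d E \<beta> i))"
  unfolding gibbs_def tv_def ..

lemma tv_pos: "i < d \<Longrightarrow> 0 < tv d E \<beta> i"
proof -
  assume i: "i < d"
  have "0 < (\<Sum>k<d. exp (- \<beta> * E k))" using i by (intro sum_pos) auto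
  then show ?thesis unfolding tv_def by simp
qed

lemma tv_sum: "0 < d \<Longrightarrow> (\<Sum>i<d. tv d E \<beta> i) = 1"
proof -
  assume d: "0 < d"
  have "0 < (\<Sum>k<d. exp (- \<beta> * E k))" using d by (intro sum_pos) auto
  then show ?thesis unfolding tv_def by (simp add: sum_divide_distrib[symmetric])
qed

lemma tv_mono:
  assumes E: "\<forall>i j. i \<le> j \<and> j < d \<longrightarrow> E i \<le> E j" and \<beta>: "0 < \<beta>" and ij: "i \<le> j" "j < d"
  shows "tv d E \<beta> j \<le> tv d E \<beta> i"
proof -
  have "0 < (\<Sum>k<d. exp (- \<beta> * E k))" using ij by (intro sum_pos) auto
  moreover have "exp (- \<beta> * E j) \<le> exp (- \<beta> * E i)" using E ij \<beta> by (simp add: mult_left_mono)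
  ultimately show ?thesis unfolding tv_def by (simp add: divide_right_mono)
qed

lemma ent_gibbs:
  assumes W: "energy_basis_change d E W" and k: "k < d"
  shows "(adj W * gibbs d E \<beta> * W) $$ (k,k) = complex_of_real (tv d E \<beta> k)"
proof -
  have Wu: "unitary_mat d W" and Wz: "\<forall>i<d. \<forall>j<d. E i \<noteq> E j \<longrightarrow> W $$ (i,j) = 0"
    using W unfolding energy_basis_change_def by auto
  have Wc: "W \<in> carrier_mat d d" and WW: "adj W * W = 1\<^sub>m d" using Wu unfolding unitary_mat_def by auto
  have Gc: "gibbs d E \<beta> \<in> carrier_mat d d" unfolding gibbs_def diag_of_def by simp
  have "(adj W * gibbs d E \<beta> * W) $$ (k,k) = (\<Sum>a<d. \<Sum>b<d. cnj (W $$ (a,k)) * gibbs d E \<beta> $$ (a,b) * W $$ (b,k))"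
    by (rule conj_entry[OF Wc Gc k k])
  also have "\<dots> = (\<Sum>a<d. cnj (W $$ (a,k)) * complex_of_real (tv d E \<beta> a) * W $$ (a,k))"
  proof (intro sum.cong refl)
    fix a assume a: "a \<in> {..<d}"
    have "(\<Sum>b<d. cnj (W $$ (a,k)) * gibbs d E \<beta> $$ (a,b) * W $$ (b,k))
        = (\<Sum>b<d. if b = a then cnj (W $$ (a,k)) * complex_of_real (tv d E \<beta> a) * W $$ (a,k) else 0)"
      using a by (intro sum.cong refl) (auto simp: gibbs_tv diag_of_def)
    also have "\<dots> = cnj (W $$ (a,k)) * complex_of_real (tv d E \<beta> a) * W $$ (a,k)" using a by simp
    finally show "(\<Sum>b<d. cnj (W $$ (a,k)) * gibbs d E \<beta> $$ (a,b) * W $$ (b,k))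
        = cnj (W $$ (a,k)) * complex_of_real (tv d E \<beta> a) * W $$ (a,k)" .
  qed
  also have "\<dots> = (\<Sum>a<d. complex_of_real (tv d E \<beta> k) * (cnj (W $$ (a,k)) * W $$ (a,k)))"
  proof (intro sum.cong refl)
    fix a assume a: "a \<in> {..<d}"
    show "cnj (W $$ (a,k)) * complex_of_real (tv d E \<beta> a) * W $$ (a,k) =
        complex_of_real (tv d E \<beta> k) * (cnj (W $$ (a,k)) * W $$ (a,k))"
    proof (cases "E a = E k")
      case True then show ?thesis unfolding tv_def by simp
    next
      case False then have "W $$ (a,k) = 0" using Wz a k by auto
      then show ?thesis by simp
    qed
  qed
  also have "\<dots> = complex_of_real (tv d E \<beta> k) * (adj W * W) $$ (k,k)"
    using Wc k by (simp add: index_mult_mat scalar_prod_def row_def col_def lessThan_atLeast0 sum_distrib_left)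
  also have "\<dots> = complex_of_real (tv d E \<beta> k)" using WW k by simp
  finally show ?thesis .
qed


lemma psum_ones: "psum (\<lambda>_. 1) d = real d"
  unfolding psum_def by simp

lemma cond_from_data:
  fixes l T :: "nat \<Rightarrow> real" and A B :: "nat \<Rightarrow> nat \<Rightarrow> real"
  assumes l: "\<forall>i j. i \<le> j \<and> j < d \<longrightarrow> l i \<le> l j"
    and T: "\<forall>i j. i \<le> j \<and> j < d \<longrightarrow> T j \<le> T i" and Tpos: "\<forall>i<d. 0 < T i"
    and A0: "\<forall>k<d. \<forall>j<d. 0 \<le> A k j" and B0: "\<forall>k<d. \<forall>i<d. 0 \<le> B k i"
    and A1: "\<forall>j<d. (\<Sum>k<d. A k j) = 1" and B1: "\<forall>i<d. (\<Sum>k<d. B k i) = 1"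
    and AB: "\<forall>k<d. (\<Sum>j<d. A k j) = (\<Sum>i<d. B k i)"
    and P: "\<forall>k<d. P k = (\<Sum>j<d. l j * A k j)"
    and TB: "\<forall>k<d. T k = (\<Sum>i<d. T i * B k i)"
  shows "condR d (\<lambda>i. l i / T i) T {..<d} T P"
  unfolding condR_def
proof (intro allI impI)
  fix S assume S: "S \<subseteq> {..<d}"
  define a where "a j = (\<Sum>k\<in>S. A k j)" for j
  define b where "b i = (\<Sum>k\<in>S. B k i)" for i
  define \<mu> where "\<mu> = (\<Sum>j<d. a j)"
  have finS: "finite S" using S finite_subset by auto
  have a01: "\<forall>j<d. 0 \<le> a j \<and> a j \<le> 1"
  proof (intro allI impI conjI)
    fix j assume j: "j < d"
    show "0 \<le> a j" unfolding a_def using A0 S j by (intro sum_nonneg) auto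
    have "a j \<le> (\<Sum>k<d. A k j)" unfolding a_def using A0 S j by (intro sum_mono2) auto
    then show "a j \<le> 1" using A1 j by simp
  qed
  have b01: "\<forall>i<d. 0 \<le> b i \<and> b i \<le> 1"
  proof (intro allI impI conjI)
    fix i assume i: "i < d"
    show "0 \<le> b i" unfolding b_def using B0 S i by (intro sum_nonneg) auto
    have "b i \<le> (\<Sum>k<d. B k i)" unfolding b_def using B0 S i by (intro sum_mono2) auto
    then show "b i \<le> 1" using B1 i by simp
  qed
  have sb: "(\<Sum>i<d. b i) = \<mu>"
  proof -
    have "(\<Sum>i<d. b i) = (\<Sum>k\<in>S. \<Sum>i<d. B k i)" unfolding b_def by (rule sum.swap)
    also have "\<dots> = (\<Sum>k\<in>S. \<Sum>j<d. A k j)" by (rule sum.cong[OF refl]) (use AB S in auto)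
    also have "\<dots> = \<mu>" unfolding \<mu>_def a_def by (rule sum.swap)
    finally show ?thesis .
  qed
  have \<mu>0: "0 \<le> \<mu>" unfolding \<mu>_def using a01 by (intro sum_nonneg) auto
  have \<mu>d: "\<mu> \<le> real d"
  proof -
    have "\<mu> \<le> (\<Sum>j<d. 1)" unfolding \<mu>_def using a01 by (intro sum_mono) auto
    then show ?thesis by simp
  qed
  have one0: "\<forall>i<d. 0 \<le> (\<lambda>_. 1::real) i" by simp
  define g where "g j = ov (\<lambda>_. 1) (real d - \<mu>) (real d) j" for j
  have g01: "0 \<le> g j \<and> g j \<le> 1" for j
    unfolding g_def using ov_nonneg[of "real d - \<mu>" "real d" "\<lambda>_. 1" j] ov_le[of "real d - \<mu>" "real d" "\<lambda>_. 1" j] \<mu>0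
    by auto
  have sa: "(\<Sum>j<d. a j) = \<mu>" unfolding \<mu>_def ..
  have la: "(\<Sum>j<d. l j * a j) \<le> (\<Sum>j<d. l j * g j)"
    using opt_eq[OF one0 l \<mu>0 _ _ sa] \<mu>d a01
    unfolding g_def psum_ones by auto
  have mT: "\<forall>i j. i \<le> j \<and> j < d \<longrightarrow> - T i \<le> - T j" using T by auto
  have tb: "(\<Sum>i<d. (- T i) * b i) \<le> (\<Sum>i<d. (- T i) * g i)"
    using opt_eq[OF one0 mT \<mu>0 _ _ sb] \<mu>d b01
    unfolding g_def psum_ones by auto
  then have tb': "(\<Sum>i<d. T i * g i) \<le> (\<Sum>i<d. T i * b i)"
    by (simp add: sum_negf)
  define c where "c i = T i * g i" for i
  show "\<exists>c. (\<forall>i<d. 0 \<le> c i \<and> c i \<le> T i) \<and> (\<Sum>i<d. c i) \<le> (\<Sum>k\<in>S. T k) \<and>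
      (\<Sum>k\<in>S. P k) \<le> (\<Sum>i<d. l i / T i * c i)"
  proof (rule exI[of _ c], intro conjI allI impI)
    fix i assume i: "i < d"
    show "0 \<le> c i" unfolding c_def using g01[of i] Tpos i by (simp add: less_imp_le)
    show "c i \<le> T i" unfolding c_def using g01[of i] Tpos i by (simp add: mult_left_le less_imp_le)
  next
    have "(\<Sum>i<d. T i * b i) = (\<Sum>k\<in>S. \<Sum>i<d. T i * B k i)"
      unfolding b_def sum_distrib_left by (rule sum.swap)
    also have "\<dots> = (\<Sum>k\<in>S. T k)"
    proof (rule sum.cong[OF refl])
      fix k assume "k \<in> S"
      then have "k < d" using S by auto
      then show "(\<Sum>i<d. T i * B k i) = T k" using TB[rule_format, of k] by metis
    qed
    finally show "(\<Sum>i<d. c i) \<le> (\<Sum>k\<in>S. T k)" using tb' unfolding c_def by simp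
  next
    have "(\<Sum>k\<in>S. P k) = (\<Sum>k\<in>S. \<Sum>j<d. l j * A k j)" by (rule sum.cong[OF refl]) (use P S in auto)
    also have "\<dots> = (\<Sum>j<d. l j * a j)" unfolding a_def sum_distrib_left
      by (rule sum.swap)
    also have "\<dots> \<le> (\<Sum>j<d. l j * g j)" by (rule la)
    also have "\<dots> = (\<Sum>i<d. l i / T i * c i)" unfolding c_def by (rule sum.cong[OF refl]) (use Tpos in auto)
    finally show "(\<Sum>k\<in>S. P k) \<le> (\<Sum>i<d. l i / T i * c i)" .
  qed
qed


definition Aq :: "(complex mat \<Rightarrow> complex mat) \<Rightarrow> complex mat \<Rightarrow> complex mat \<Rightarrow> nat \<Rightarrow> nat \<Rightarrow> nat \<Rightarrow> real" where
  "Aq \<Lambda> W Q d k j = Re ((adj W * \<Lambda> (proj d (col Q j)) * W) $$ (k,k))"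

lemma Aq_nonneg:
  assumes L: "quantum_channel d \<Lambda>" and W: "unitary_mat d W" and k: "k < d"
  shows "0 \<le> Aq \<Lambda> W Q d k j"
proof -
  have Wc: "W \<in> carrier_mat d d" using W unfolding unitary_mat_def by auto
  have P: "psd d (\<Lambda> (proj d (col Q j)))" by (rule chan_pos[OF L proj_psd])
  then have Pc: "\<Lambda> (proj d (col Q j)) \<in> carrier_mat d d" unfolding psd_def by auto
  have "col W k \<in> carrier_vec d" using Wc by auto
  then show ?thesis unfolding Aq_def conj_entry_qf[OF Wc Pc k] using psd_qf[OF P] by auto
qed

lemma Aq_colsum:
  assumes L: "quantum_channel d \<Lambda>" and W: "unitary_mat d W" and Q: "unitary_mat d Q" and j: "j < d"
  shows "(\<Sum>k<d. Aq \<Lambda> W Q d k j) = 1"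
proof -
  have Qc: "Q \<in> carrier_mat d d" and QQ: "adj Q * Q = 1\<^sub>m d" using Q unfolding unitary_mat_def by auto
  have Pc: "\<Lambda> (proj d (col Q j)) \<in> carrier_mat d d" using L unfolding quantum_channel_def by auto
  have "(\<Sum>k<d. Aq \<Lambda> W Q d k j) = Re (\<Sum>k<d. (adj W * \<Lambda> (proj d (col Q j)) * W) $$ (k,k))"
    unfolding Aq_def by (simp add: Re_sum)
  also have "\<dots> = Re (mtrace (\<Lambda> (proj d (col Q j))))" using sum_ent[OF W Pc] by simp
  also have "mtrace (\<Lambda> (proj d (col Q j))) = mtrace (proj d (col Q j))"
    using L unfolding quantum_channel_def by auto
  also have "\<dots> = (\<Sum>a<d. Q $$ (a,j) * cnj (Q $$ (a,j)))"
    unfolding mtrace_def proj_def using Qc j by simp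
  also have "\<dots> = (adj Q * Q) $$ (j,j)"
    using Qc j by (simp add: index_mult_mat scalar_prod_def row_def col_def lessThan_atLeast0 mult.commute)
  also have "\<dots> = 1" using QQ j by simp
  finally show ?thesis by simp
qed

lemma Aq_expand:
  assumes L: "quantum_channel d \<Lambda>" and W: "unitary_mat d W" and Qc: "Q \<in> carrier_mat d d" and k: "k < d"
  shows "Re ((adj W * \<Lambda> (Q * diag_of d (\<lambda>j. complex_of_real (f j)) * adj Q) * W) $$ (k,k))
       = (\<Sum>j<d. f j * Aq \<Lambda> W Q d k j)"
proof -
  have Wc: "W \<in> carrier_mat d d" using W unfolding unitary_mat_def by auto
  have Pc: "\<forall>j<d. proj d (col Q j) \<in> carrier_mat d d" by simp
  have LPc: "\<forall>j<d. \<Lambda> (proj d (col Q j)) \<in> carrier_mat d d" using L unfolding quantum_channel_def by auto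
  have "\<Lambda> (Q * diag_of d (\<lambda>j. complex_of_real (f j)) * adj Q)
      = msum d (\<lambda>j. complex_of_real (f j) \<cdot>\<^sub>m \<Lambda> (proj d (col Q j))) d"
    unfolding udiag_msum[OF Qc] by (rule chan_msum[OF L Pc])
  then have "(adj W * \<Lambda> (Q * diag_of d (\<lambda>j. complex_of_real (f j)) * adj Q) * W) $$ (k,k)
      = (\<Sum>j<d. complex_of_real (f j) * (adj W * \<Lambda> (proj d (col Q j)) * W) $$ (k,k))"
    using ent_msum[OF Wc LPc k] by simp
  then show ?thesis unfolding Aq_def by (simp add: Re_sum)
qed


lemma unitary_one: "unitary_mat d (1\<^sub>m d)"
  unfolding unitary_mat_def by simp

theorem lemma1:
  fixes d :: nat and E :: "nat \<Rightarrow> real" and \<beta> :: real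
    and \<rho> U :: "complex mat" and lam :: "real list"
  assumes "\<forall>i j. i \<le> j \<and> j < d \<longrightarrow> E i \<le> E j"
    and "\<beta> > 0"
    and "is_state d \<rho>"
    and "ascending_eigenvalues \<rho> lam"
    and "unitary_mat d U"
  shows "thermal_polytope d E \<beta> (U * \<rho> * adj U)
           \<subseteq> thermal_polytope d E \<beta> (maximally_active d lam)"
proof
  fix p assume pin: "p \<in> thermal_polytope d E \<beta> (U * \<rho> * adj U)"
  note Emono = assms(1) and \<beta>pos = assms(2)
  have \<rho>psd: "psd d \<rho>" and tr\<rho>: "mtrace \<rho> = 1" using assms(3) unfolding is_state_def by auto
  have \<rho>c: "\<rho> \<in> carrier_mat d d" and \<rho>h: "adj \<rho> = \<rho>" using \<rho>psd unfolding psd_def by auto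
  have lenlam: "length lam = d" and srt: "sorted lam"
    and cp: "char_poly \<rho> = (\<Prod>a\<leftarrow>lam. [:- complex_of_real a, 1:])"
    using assms(4) \<rho>c unfolding ascending_eigenvalues_def by auto
  have Uc: "U \<in> carrier_mat d d" using assms(5) unfolding unitary_mat_def by auto
  show "p \<in> thermal_polytope d E \<beta> (maximally_active d lam)"
  proof (cases "d = 0")
    case True
    have "U * \<rho> * adj U = maximally_active d lam"
      by (rule eq_matI) (use Uc \<rho>c True in \<open>auto simp: maximally_active_def diag_of_def\<close>)
    then show ?thesis using pin by simp
  next
    case False
    then have d0: "0 < d" by simp
    define \<sigma> where "\<sigma> = U * \<rho> * adj U"
    obtain \<Lambda> W where DT: "dephasing_thermalization d E \<beta> \<Lambda>" and EW: "energy_basis_change d E W"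
      and pdef: "p = vec d (\<lambda>i. Re ((adj W * \<Lambda> \<sigma> * W) $$ (i,i)))"
      using pin unfolding thermal_polytope_def \<sigma>_def by blast
    have L: "quantum_channel d \<Lambda>" and Lg: "\<Lambda> (gibbs d E \<beta>) = gibbs d E \<beta>"
      using DT unfolding dephasing_thermalization_def by auto
    have Wu: "unitary_mat d W" using EW unfolding energy_basis_change_def by auto
    have cp': "char_poly \<rho> = (\<Prod>e\<leftarrow>map complex_of_real lam. [:-e, 1:])" using cp by (simp add: o_def)
    obtain V where Vu: "unitary_mat d V" and \<rho>eq0: "\<rho> = V * diag_of d (\<lambda>i. map complex_of_real lam ! i) * adj V"
      using hermitian_spectral[OF \<rho>c \<rho>h cp'] lenlam by auto
    define D where "D = diag_of d (\<lambda>i. complex_of_real (lam ! i))"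
    have "diag_of d (\<lambda>i. map complex_of_real lam ! i) = D"
      by (rule eq_matI) (auto simp: D_def diag_of_def lenlam)
    then have \<rho>eq: "\<rho> = V * D * adj V" using \<rho>eq0 by simp
    have Vc: "V \<in> carrier_mat d d" and VV: "adj V * V = 1\<^sub>m d" using Vu unfolding unitary_mat_def by auto
    have aVc: "adj V \<in> carrier_mat d d" using Vc by simp
    have aUc: "adj U \<in> carrier_mat d d" using Uc by simp
    have Dc: "D \<in> carrier_mat d d" unfolding D_def diag_of_def by simp
    define Q where "Q = U * V"
    have Qu: "unitary_mat d Q" unfolding Q_def by (rule unitary_mult[OF assms(5) Vu])
    have Qc: "Q \<in> carrier_mat d d" using Qu unfolding unitary_mat_def by auto
    have \<sigma>eq: "\<sigma> = Q * D * adj Q"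
    proof -
      have "U * (V * D * adj V) = U * (V * D) * adj V" by (rule sym, rule assoc4) (use Uc Vc Dc in auto)
      also have "U * (V * D) = U * V * D" by (rule sym, rule assoc4) (use Uc Vc Dc in auto)
      finally have "\<sigma> = U * V * D * adj V * adj U" unfolding \<sigma>_def \<rho>eq by simp
      also have "\<dots> = (U * V * D) * (adj V * adj U)" by (rule assoc4) (use Uc Vc Dc in auto)
      also have "adj V * adj U = adj Q" unfolding Q_def using adj_mult[OF Uc Vc] by simp
      finally show ?thesis unfolding Q_def by simp
    qed
    have VDV: "adj V * \<rho> * V = D"
    proof -
      have "adj V * (V * D * adj V) = adj V * (V * (D * adj V))"
        using assoc4[OF Vc Dc aVc] by simp
      also have "\<dots> = (adj V * V) * (D * adj V)" by (rule sym, rule assoc4) (use Vc Dc aVc in auto)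
      also have "\<dots> = D * adj V" using VV Dc aVc by simp
      finally have "adj V * \<rho> * V = D * adj V * V" unfolding \<rho>eq by simp
      also have "\<dots> = D * (adj V * V)" by (rule assoc4) (use Vc Dc aVc in auto)
      finally show ?thesis using VV Dc by simp
    qed
    have lam0: "0 \<le> lam ! j" if j: "j < d" for j
    proof -
      have "complex_of_real (lam ! j) = (adj V * \<rho> * V) $$ (j,j)" using VDV j by (simp add: D_def diag_of_def)
      also have "\<dots> = qf d \<rho> (col V j)" by (rule conj_entry_qf[OF Vc \<rho>c j])
      finally have "complex_of_real (lam ! j) = qf d \<rho> (col V j)" .
      moreover have "col V j \<in> carrier_vec d" using Vc by auto
      ultimately show ?thesis using psd_qf[OF \<rho>psd] by (metis Re_complex_of_real)
    qed
    have lamsum: "(\<Sum>j<d. lam ! j) = 1"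
    proof -
      have "mtrace \<rho> = mtrace (adj (adj V) * D * adj V)" unfolding \<rho>eq by simp
      also have "\<dots> = mtrace D" by (rule mtrace_conj[OF unitary_adj[OF Vu] Dc])
      finally have "mtrace D = 1" using tr\<rho> by simp
      then have "(\<Sum>j<d. complex_of_real (lam ! j)) = 1" unfolding mtrace_def D_def diag_of_def by simp
      then show ?thesis by (metis Re_complex_of_real of_real_sum one_complex.sel(1))
    qed
    define T where "T = tv d E \<beta>"
    define A where "A = Aq \<Lambda> W Q d"
    define B where "B = Aq \<Lambda> W (1\<^sub>m d) d"
    have Tpos: "\<forall>i<d. 0 < T i" unfolding T_def using tv_pos by auto
    have Tmono: "\<forall>i j. i \<le> j \<and> j < d \<longrightarrow> T j \<le> T i" unfolding T_def using tv_mono[OF Emono \<beta>pos] by auto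
    have lmono: "\<forall>i j. i \<le> j \<and> j < d \<longrightarrow> lam ! i \<le> lam ! j"
      using srt lenlam by (auto intro: sorted_nth_mono)
    have A0: "\<forall>k<d. \<forall>j<d. 0 \<le> A k j" unfolding A_def using Aq_nonneg[OF L Wu] by auto
    have B0: "\<forall>k<d. \<forall>i<d. 0 \<le> B k i" unfolding B_def using Aq_nonneg[OF L Wu] by auto
    have A1: "\<forall>j<d. (\<Sum>k<d. A k j) = 1" unfolding A_def using Aq_colsum[OF L Wu Qu] by auto
    have B1: "\<forall>i<d. (\<Sum>k<d. B k i) = 1" unfolding B_def using Aq_colsum[OF L Wu unitary_one] by auto
    have one1: "\<forall>k<d. (\<Sum>j<d. A k j) = Re ((adj W * \<Lambda> (1\<^sub>m d) * W) $$ (k,k))"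
    proof (intro allI impI)
      fix k assume k: "k < d"
      have "Q * diag_of d (\<lambda>j. complex_of_real 1) * adj Q = 1\<^sub>m d"
        using diag_of_one[of d] Qu Qc unfolding unitary_mat_def by simp
      then show "(\<Sum>j<d. A k j) = Re ((adj W * \<Lambda> (1\<^sub>m d) * W) $$ (k,k))"
        using Aq_expand[OF L Wu Qc k, of "\<lambda>_. 1"] unfolding A_def by simp
    qed
    have one2: "\<forall>k<d. (\<Sum>i<d. B k i) = Re ((adj W * \<Lambda> (1\<^sub>m d) * W) $$ (k,k))"
    proof (intro allI impI)
      fix k assume k: "k < d"
      have "1\<^sub>m d * diag_of d (\<lambda>j. complex_of_real 1) * adj (1\<^sub>m d) = 1\<^sub>m d"
        using diag_of_one[of d] by simp
      then show "(\<Sum>i<d. B k i) = Re ((adj W * \<Lambda> (1\<^sub>m d) * W) $$ (k,k))"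
        using Aq_expand[OF L Wu one_carrier_mat k, of "\<lambda>_. 1"] unfolding B_def by simp
    qed
    have AB: "\<forall>k<d. (\<Sum>j<d. A k j) = (\<Sum>i<d. B k i)" using one1 one2 by simp
    have Pk: "\<forall>k<d. p $ k = (\<Sum>j<d. lam ! j * A k j)"
    proof (intro allI impI)
      fix k assume k: "k < d"
      have "p $ k = Re ((adj W * \<Lambda> \<sigma> * W) $$ (k,k))" using pdef k by simp
      also have "\<dots> = (\<Sum>j<d. lam ! j * A k j)"
        unfolding \<sigma>eq D_def A_def by (rule Aq_expand[OF L Wu Qc k])
      finally show "p $ k = (\<Sum>j<d. lam ! j * A k j)" .
    qed
    have TB: "\<forall>k<d. T k = (\<Sum>i<d. T i * B k i)"
    proof (intro allI impI)
      fix k assume k: "k < d"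
      have g: "gibbs d E \<beta> = 1\<^sub>m d * diag_of d (\<lambda>i. complex_of_real (T i)) * adj (1\<^sub>m d)"
        unfolding gibbs_tv T_def by (simp add: diag_of_def)
      have "complex_of_real (T k) = (adj W * gibbs d E \<beta> * W) $$ (k,k)"
        unfolding T_def by (rule ent_gibbs[OF EW k, symmetric])
      also have "\<dots> = (adj W * \<Lambda> (gibbs d E \<beta>) * W) $$ (k,k)" using Lg by simp
      finally have "T k = Re ((adj W * \<Lambda> (gibbs d E \<beta>) * W) $$ (k,k))" by (metis Re_complex_of_real)
      also have "\<dots> = (\<Sum>i<d. T i * B k i)"
        unfolding B_def by (subst g, rule Aq_expand[OF L Wu one_carrier_mat k])
      finally show "T k = (\<Sum>i<d. T i * B k i)" .
    qed
    have cond: "condR d (\<lambda>i. lam ! i / T i) T {..<d} T (\<lambda>k. p $ k)"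
      by (rule cond_from_data[OF lmono Tmono Tpos A0 B0 A1 B1 AB Pk TB])
    have rmono: "\<forall>i j. i \<le> j \<and> j < d \<longrightarrow> lam ! i / T i \<le> lam ! j / T j"
    proof (intro allI impI)
      fix i j assume ij: "i \<le> j \<and> j < d"
      have "lam ! i / T i \<le> lam ! i / T j"
        using lam0[of i] Tpos Tmono ij by (intro divide_left_mono) auto
      also have "\<dots> \<le> lam ! j / T j" using lmono Tpos ij by (intro divide_right_mono) (auto simp: less_imp_le)
      finally show "lam ! i / T i \<le> lam ! j / T j" .
    qed
    have r0: "\<forall>i<d. 0 \<le> lam ! i / T i" using lam0 Tpos by (simp add: less_imp_le)
    have T0: "\<forall>i<d. 0 \<le> T i" using Tpos by (simp add: less_imp_le)
    have Tk: "\<forall>k\<in>{..<d}. 0 < T k" using Tpos by simp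
    have srt2: "(\<Sum>i<d. lam ! i / T i * T i) = (\<Sum>k\<in>{..<d}. p $ k)"
    proof -
      have "(\<Sum>i<d. lam ! i / T i * T i) = (\<Sum>i<d. lam ! i)"
        using Tpos by (intro sum.cong refl) auto
      also have "\<dots> = (\<Sum>j<d. lam ! j * (\<Sum>k<d. A k j))" using A1 by simp
      also have "\<dots> = (\<Sum>k<d. \<Sum>j<d. lam ! j * A k j)"
        unfolding sum_distrib_left by (rule sum.swap)
      also have "\<dots> = (\<Sum>k\<in>{..<d}. p $ k)" using Pk by simp
      finally show ?thesis .
    qed
    obtain X where X0: "\<forall>k\<in>{..<d}. \<forall>i<d. 0 \<le> X k i" and Xc: "\<forall>i<d. (\<Sum>k\<in>{..<d}. X k i) = T i"
      and Xr: "\<forall>k\<in>{..<d}. (\<Sum>i<d. X k i) = T k" and Xp: "\<forall>k\<in>{..<d}. (\<Sum>i<d. lam ! i / T i * X k i) = p $ k"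
      using classical_core[OF _ _ rmono r0 Tk T0 refl srt2 cond] d0 by blast
    define G where "G k i = X k i / T i" for k i
    have G0: "\<forall>k<d. \<forall>i<d. 0 \<le> G k i" unfolding G_def using X0 Tpos by (simp add: less_imp_le)
    have G1: "\<forall>i<d. (\<Sum>k<d. G k i) = 1"
      unfolding G_def using Xc Tpos by (simp add: sum_divide_distrib[symmetric] less_imp_neq[symmetric])
    have Lq: "quantum_channel d (cchan d G)" by (rule cchan_qc[OF G0 G1])
    have Lgib: "cchan d G (gibbs d E \<beta>) = gibbs d E \<beta>"
    proof (rule eq_matI)
      fix k l assume "k < dim_row (gibbs d E \<beta>)" "l < dim_col (gibbs d E \<beta>)"
      then have k: "k < d" and l: "l < d" by (auto simp: gibbs_def diag_of_def)
      show "cchan d G (gibbs d E \<beta>) $$ (k,l) = gibbs d E \<beta> $$ (k,l)"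
      proof (cases "k = l")
        case True
        have "(\<Sum>i<d. complex_of_real (G k i) * gibbs d E \<beta> $$ (i,i)) = complex_of_real (\<Sum>i<d. X k i)"
          unfolding of_real_sum
          by (intro sum.cong refl) (use Tpos in \<open>auto simp: G_def gibbs_tv diag_of_def T_def\<close>)
        then show ?thesis using True k Xr by (simp add: cchan_index gibbs_tv diag_of_def T_def)
      next
        case False then show ?thesis using k l by (simp add: cchan_index gibbs_tv diag_of_def)
      qed
    qed (auto simp: gibbs_def diag_of_def)
    have DT': "dephasing_thermalization d E \<beta> (cchan d G)"
      unfolding dephasing_thermalization_def using Lq Lgib by (auto simp: cchan_index)
    have EW': "energy_basis_change d E (1\<^sub>m d)"
      unfolding energy_basis_change_def using unitary_one by auto
    define R where "R = cchan d G (maximally_active d lam)"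
    have Rc: "R \<in> carrier_mat d d" unfolding R_def by simp
    have R1: "adj (1\<^sub>m d) * R * 1\<^sub>m d = R" using Rc by simp
    have diagR: "diagonal_mat (adj (1\<^sub>m d) * R * 1\<^sub>m d)"
      unfolding R1 diagonal_mat_def R_def by (auto simp: cchan_index)
    have pR: "p = vec d (\<lambda>i. Re ((adj (1\<^sub>m d) * R * 1\<^sub>m d) $$ (i,i)))"
    proof (rule eq_vecI)
      fix k assume "k < dim_vec (vec d (\<lambda>i. Re ((adj (1\<^sub>m d) * R * 1\<^sub>m d) $$ (i,i))))"
      then have k: "k < d" by simp
      have "R $$ (k,k) = (\<Sum>i<d. complex_of_real (G k i) * complex_of_real (lam ! i))"
        unfolding R_def using k by (simp add: cchan_index maximally_active_def diag_of_def)
      also have "\<dots> = complex_of_real (\<Sum>i<d. lam ! i / T i * X k i)"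
        unfolding of_real_sum by (intro sum.cong refl) (auto simp: G_def)
      also have "\<dots> = complex_of_real (p $ k)" using Xp k by simp
      finally show "p $ k = vec d (\<lambda>i. Re ((adj (1\<^sub>m d) * R * 1\<^sub>m d) $$ (i,i))) $ k"
        unfolding R1 using k by simp
    qed (use pdef in simp)
    show ?thesis unfolding thermal_polytope_def
      using DT' EW' diagR pR unfolding R_def by blast
  qed
qed


end
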